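(* In the setting of the context, let $\sigma_n^{*2}$ be the optimal reverse variance at step $n\in\{1,\dots,N\}$. Then $$\lambda_n^2\le\sigma_n^{*2}\le\lambda_n^2+\Big(\sqrt{\tfrac{\overline{\beta}_n}{\alpha_n}}-\sqrt{\overline{\beta}_{n-1}-\lambda_n^2}\Big)^2.$$ If moreover $q(\mathbf{x}_0)$ is supported in $[a,b]^d$, then $$\sigma_n^{*2}\le\lambda_n^2+\Big(\sqrt{\overline{\alpha}_{n-1}}-\sqrt{\overline{\beta}_{n-1}-\lambda_n^2}\cdot\sqrt{\tfrac{\overline{\alpha}_n}{\overline{\beta}_n}}\Big)^2\Big(\frac{b-a}{2}\Big)^2.$$
   Context: Let $d,N\ge 1$. Let $\beta_1,\dots,\beta_N\in(0,1)$, $\alpha_n:=1-\beta_n$, $\overline{\alpha}_n:=\prod_{i=1}^n\alpha_i$, $\overline{\beta}_n:=1-\overline{\alpha}_n$, with $\overline{\alpha}_0:=1$, $\overline{\beta}_0:=0$. Let $\lambda_n\ge0$ with $\lambda_n^2\le\overline{\beta}_{n-1}$ (so $\lambda_1=0$). Let $q(\mathbf{x}_0)$ be a probability density on $\mathbb{R}^d$ with finite second moments. Define $\tilde{\boldsymbol{\mu}}_n(\mathbf{x}_n,\mathbf{x}_0):=\sqrt{\overline{\alpha}_{n-1}}\mathbf{x}_0+\sqrt{\overline{\beta}_{n-1}-\lambda_n^2}\,\frac{\mathbf{x}_n-\sqrt{\overline{\alpha}_n}\mathbf{x}_0}{\sqrt{\overline{\beta}_n}}$ and the forward process $q(\mathbf{x}_{0:N})=q(\mathbf{x}_0)q(\mathbf{x}_N|\mathbf{x}_0)\prod_{n=2}^Nq(\mathbf{x}_{n-1}|\mathbf{x}_n,\mathbf{x}_0)$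 with $q(\mathbf{x}_N|\mathbf{x}_0)=\mathcal{N}(\sqrt{\overline{\alpha}_N}\mathbf{x}_0,\overline{\beta}_N\mathbf{I})$ and $q(\mathbf{x}_{n-1}|\mathbf{x}_n,\mathbf{x}_0)=\mathcal{N}(\tilde{\boldsymbol{\mu}}_n(\mathbf{x}_n,\mathbf{x}_0),\lambda_n^2\mathbf{I})$. The reverse model is $p(\mathbf{x}_{0:N})=p(\mathbf{x}_N)\prod_{n=1}^Np(\mathbf{x}_{n-1}|\mathbf{x}_n)$, $p(\mathbf{x}_N)=\mathcal{N}(\mathbf{0},\mathbf{I})$, $p(\mathbf{x}_{n-1}|\mathbf{x}_n)=\mathcal{N}(\boldsymbol{\mu}_n(\mathbf{x}_n),\sigma_n^2\mathbf{I})$. The optimal reverse variances $\sigma_n^{*2}$ are the variances of a minimizer of $D_{\mathrm{KL}}(q(\mathbf{x}_{0:N})\|p(\mathbf{x}_{0:N}))$ over all $\{\boldsymbol{\mu}_n,\sigma_n^2\}_{n=1}^N$; they equal $\sigma_n^{*2}=\mathbb{E}_{q_n(\mathbf{x}_n)}\mathrm{tr}(\mathrm{Cov}_{q(\mathbf{x}_{n-1}|\mathbf{x}_n)}[\mathbf{x}_{n-1}])/d$, where $q_n$ is the marginal of $\mathbf{x}_n$. *)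

theory Defs
  imports "HOL-Probability.Probability"
begin

text \<open>Noise schedule quantities. Indices of beta, lambda range over 1..N.\<close>

definition alpha_s :: "(nat \<Rightarrow> real) \<Rightarrow> nat \<Rightarrow> real" where
  "alpha_s \<beta> n = 1 - \<beta> n"

definition alpha_bar :: "(nat \<Rightarrow> real) \<Rightarrow> nat \<Rightarrow> real" where
  "alpha_bar \<beta> n = (\<Prod>i=1..n. alpha_s \<beta> i)"

definition beta_bar :: "(nat \<Rightarrow> real) \<Rightarrow> nat \<Rightarrow> real" where
  "beta_bar \<beta> n = 1 - alpha_bar \<beta> n"

definition gauss :: "real^'d \<Rightarrow> real \<Rightarrow> (real^'d) measure" where
  "gauss m s2 = (if s2 = 0 then return borel m
     else density lborel (\<lambda>x. ennreal ((2 * pi * s2) powr (- real CARD('d) / 2)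
                                 * exp (- (norm (x - m))\<^sup>2 / (2 * s2)))))"

text \<open>Mean of q(x_{n-1} | x_n, x_0).\<close>

definition mu_tilde :: "(nat \<Rightarrow> real) \<Rightarrow> (nat \<Rightarrow> real) \<Rightarrow> nat \<Rightarrow> real^'d \<Rightarrow> real^'d \<Rightarrow> real^'d" where
  "mu_tilde \<beta> lam n xn x0 =
     sqrt (alpha_bar \<beta> (n - 1)) *\<^sub>R x0
     + (sqrt (beta_bar \<beta> (n - 1) - (lam n)\<^sup>2) / sqrt (beta_bar \<beta> n)) *\<^sub>R
         (xn - sqrt (alpha_bar \<beta> n) *\<^sub>R x0)"

text \<open>Trajectories x_{0:N} are represented as functions nat \<Rightarrow> real^'d (index k = x_k;
  indices > N are irrelevant).\<close>

abbreviation traj_space :: "(nat \<Rightarrow> real^'d) measure" where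
  "traj_space \<equiv> PiM UNIV (\<lambda>_. borel)"

definition fwd_init :: "(real^'d \<Rightarrow> real) \<Rightarrow> (nat \<Rightarrow> real) \<Rightarrow> nat \<Rightarrow> (nat \<Rightarrow> real^'d) measure" where
  "fwd_init q \<beta> N =
     bind (density lborel (\<lambda>x. ennreal (q x)))
       (\<lambda>x0. distr (gauss (sqrt (alpha_bar \<beta> N) *\<^sub>R x0) (beta_bar \<beta> N)) traj_space
                (\<lambda>xN. (\<lambda>k. if k = N then xN else x0)))"

text \<open>One backward-in-index step of the forward process: sample x_{m-1} ~ q(x_{m-1} | x_m, x_0).\<close>

definition fwd_step :: "(nat \<Rightarrow> real) \<Rightarrow> (nat \<Rightarrow> real) \<Rightarrow> nat \<Rightarrow> (nat \<Rightarrow> real^'d) measure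
                        \<Rightarrow> (nat \<Rightarrow> real^'d) measure" where
  "fwd_step \<beta> lam m M =
     bind M (\<lambda>x. distr (gauss (mu_tilde \<beta> lam m (x m) (x 0)) ((lam m)\<^sup>2)) traj_space
                        (\<lambda>y. x(m - 1 := y)))"

fun fwd_partial :: "(real^'d \<Rightarrow> real) \<Rightarrow> (nat \<Rightarrow> real) \<Rightarrow> (nat \<Rightarrow> real) \<Rightarrow> nat \<Rightarrow> nat
                     \<Rightarrow> (nat \<Rightarrow> real^'d) measure" where
  "fwd_partial q \<beta> lam N 0 = fwd_init q \<beta> N"
| "fwd_partial q \<beta> lam N (Suc k) = fwd_step \<beta> lam (N - k) (fwd_partial q \<beta> lam N k)"

text \<open>The forward process q(x_{0:N}) = q(x_0) q(x_N|x_0) prod_{n=2}^N q(x_{n-1}|x_n,x_0).\<close>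

definition fwd_process :: "(real^'d \<Rightarrow> real) \<Rightarrow> (nat \<Rightarrow> real) \<Rightarrow> (nat \<Rightarrow> real) \<Rightarrow> nat
                            \<Rightarrow> (nat \<Rightarrow> real^'d) measure" where
  "fwd_process q \<beta> lam N = fwd_partial q \<beta> lam N (N - 1)"

text \<open>Optimal reverse variance:
  sigma*_n^2 = E_{q_n(x_n)} tr Cov_{q(x_{n-1}|x_n)}[x_{n-1}] / d,
  where the expected trace of the conditional covariance is written as
  sum_i E[(x_{n-1,i} - E[x_{n-1,i} | x_n])^2].\<close>

definition opt_var :: "(real^'d \<Rightarrow> real) \<Rightarrow> (nat \<Rightarrow> real) \<Rightarrow> (nat \<Rightarrow> real) \<Rightarrow> nat \<Rightarrow> nat \<Rightarrow> real" where
  "opt_var q \<beta> lam N n =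
     (let Q = fwd_process q \<beta> lam N;
          F = vimage_algebra (space Q) (\<lambda>\<omega>. \<omega> n) borel
      in (\<Sum>i\<in>UNIV. \<integral>\<omega>. ((\<omega> (n - 1)) $ i
                            - real_cond_exp Q F (\<lambda>\<omega>'. (\<omega>' (n - 1)) $ i) \<omega>)\<^sup>2 \<partial>Q)
         / real CARD('d))"

end

theory Submission
  imports Defs
begin


abbreviation std :: "(real^'d) measure" where
  "std \<equiv> gauss 0 1"

definition phi :: "real^'d \<Rightarrow> real" where
  "phi x = (2 * pi) powr (- real CARD('d) / 2) * exp (- (norm x)\<^sup>2 / 2)"

lemma std_def': "(std :: (real^'d) measure) = density lborel (\<lambda>x. ennreal (phi x))"
  unfolding gauss_def phi_def by simp

lemma norm_sq_basis: "(norm (x::real^'d))\<^sup>2 = (\<Sum>b\<in>Basis. (x \<bullet> b)\<^sup>2)"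
  by (subst power2_norm_eq_inner, subst euclidean_inner) (simp add: power2_eq_square)

lemma card_Basis_cart: "card (Basis :: (real^'d) set) = CARD('d)"
  using DIM_cart[where 'a=real and 'b='d] by simp

lemma phi_prod: "phi (x::real^'d) = (\<Prod>b\<in>Basis. std_normal_density (x \<bullet> b))"
proof -
  have "(\<Prod>b\<in>(Basis::(real^'d) set). std_normal_density (x \<bullet> b))
      = (\<Prod>b\<in>(Basis::(real^'d) set). (2*pi) powr (-1/2) * exp (- (x \<bullet> b)\<^sup>2 / 2))"
    by (intro prod.cong refl) (simp add: std_normal_density_def powr_minus_divide powr_half_sqrt)
  also have "\<dots> = ((2*pi) powr (-1/2)) ^ card (Basis::(real^'d) set) * exp (\<Sum>b\<in>(Basis::(real^'d) set). - (x \<bullet> b)\<^sup>2 / 2)"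
    by (simp add: prod.distrib exp_sum)
  also have "((2*pi) powr (-1/2)) ^ card (Basis::(real^'d) set) = (2 * pi) powr (- real CARD('d) / 2)"
    by (simp add: card_Basis_cart powr_power)
  also have "(\<Sum>b\<in>(Basis::(real^'d) set). - (x \<bullet> b)\<^sup>2 / 2) = - (norm x)\<^sup>2 / 2"
    by (simp add: norm_sq_basis sum_divide_distrib sum_negf)
  finally show ?thesis by (simp add: phi_def)
qed

lemma phi_nonneg: "0 \<le> phi x" by (simp add: phi_def)

lemma phi_meas[measurable]: "phi \<in> borel_measurable borel"
  unfolding phi_def by measurable

lemma nn_std_normal: "(\<integral>\<^sup>+x. ennreal (std_normal_density x) \<partial>lborel) = 1"
proof -
  interpret prob_space "density lborel (normal_density 0 1)" by (rule prob_space_normal_density) simp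
  have "emeasure (density lborel (\<lambda>x. ennreal (normal_density 0 1 x))) UNIV = 1"
    using emeasure_space_1 by simp
  then show ?thesis by (subst (asm) emeasure_density) auto
qed

lemma nn_std_normal_sq: "(\<integral>\<^sup>+x. ennreal (std_normal_density x * x\<^sup>2) \<partial>lborel) = 1"
proof -
  have "has_bochner_integral lborel (\<lambda>x. std_normal_density x * x ^ (2 * 1)) (fact (2 * 1) / (2^1 * fact 1))"
    by (rule std_normal_moment_even)
  then have "has_bochner_integral lborel (\<lambda>x. std_normal_density x * x\<^sup>2) 1"
    by (simp add: numeral_eq_Suc)
  then have "integrable lborel (\<lambda>x. std_normal_density x * x\<^sup>2)"
     "integral\<^sup>L lborel (\<lambda>x. std_normal_density x * x\<^sup>2) = 1"
    by (auto simp: has_bochner_integral_iff)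
  then show ?thesis
    by (subst nn_integral_eq_integral) (auto simp: normal_density_nonneg)
qed

lemma std_prob: "prob_space (std :: (real^'d) measure)"
proof
  have "emeasure (std :: (real^'d) measure) (space std) = (\<integral>\<^sup>+x. ennreal (phi (x::real^'d)) \<partial>lborel)"
    by (simp add: std_def' emeasure_density)
  also have "\<dots> = (\<integral>\<^sup>+x. (\<Prod>b\<in>(Basis::(real^'d) set). ennreal (std_normal_density (x \<bullet> b))) \<partial>lborel)"
    by (simp add: phi_prod prod_ennreal normal_density_nonneg)
  also have "\<dots> = (\<Prod>b\<in>(Basis::(real^'d) set). (\<integral>\<^sup>+x. ennreal (std_normal_density x) \<partial>lborel))"
    by (rule nn_integral_lborel_prod) auto
  also have "\<dots> = 1" by (simp add: nn_std_normal)
  finally show "emeasure (std :: (real^'d) measure) (space std) = 1" .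
qed

lemma std_UNIV[simp]: "emeasure (std :: (real^'d) measure) UNIV = 1"
  using prob_space.emeasure_space_1[OF std_prob] by (simp add: std_def')

lemma sets_std[measurable_cong, simp]: "sets (std :: (real^'d) measure) = sets borel"
  by (simp add: std_def')

lemma space_std[simp]: "space (std :: (real^'d) measure) = UNIV"
  by (simp add: std_def')

lemma nn_lborel_affine:
  fixes g :: "'a::euclidean_space \<Rightarrow> ennreal"
  assumes c: "c \<noteq> 0" and g[measurable]: "g \<in> borel_measurable borel"
  shows "(\<integral>\<^sup>+x. g x \<partial>lborel) = (\<integral>\<^sup>+x. ennreal (\<bar>c\<bar>^DIM('a)) * g (t + c *\<^sub>R x) \<partial>lborel)"
proof -
  have "(\<integral>\<^sup>+x. g x \<partial>lborel) = (\<integral>\<^sup>+x. g x \<partial>density (distr lborel borel (\<lambda>x. t + c *\<^sub>R x)) (\<lambda>_. \<bar>c\<bar>^DIM('a)))"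
    by (subst lborel_affine[OF c, of t]) (rule refl)
  also have "\<dots> = (\<integral>\<^sup>+x. ennreal (\<bar>c\<bar>^DIM('a)) * g x \<partial>distr lborel borel (\<lambda>x. t + c *\<^sub>R x))"
    by (subst nn_integral_density) auto
  also have "\<dots> = (\<integral>\<^sup>+x. ennreal (\<bar>c\<bar>^DIM('a)) * g (t + c *\<^sub>R x) \<partial>lborel)"
    by (subst nn_integral_distr) auto
  finally show ?thesis .
qed

lemma nn_std: "f \<in> borel_measurable borel \<Longrightarrow>
  (\<integral>\<^sup>+z. f z \<partial>(std :: (real^'d) measure)) = (\<integral>\<^sup>+z. ennreal (phi z) * f z \<partial>lborel)"
  by (simp add: std_def' nn_integral_density)

lemma std_sym:
  assumes f[measurable]: "f \<in> borel_measurable borel"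
  shows "(\<integral>\<^sup>+z. f (- z) \<partial>(std :: (real^'d) measure)) = (\<integral>\<^sup>+z. f z \<partial>std)"
proof -
  have "(\<integral>\<^sup>+z. f (- z) \<partial>(std :: (real^'d) measure)) = (\<integral>\<^sup>+z. ennreal (phi z) * f (- z) \<partial>lborel)"
    by (rule nn_std) simp
  also have "\<dots> = (\<integral>\<^sup>+z. ennreal (\<bar>-1\<bar>^DIM(real^'d)) * (ennreal (phi (0 + (-1) *\<^sub>R z)) * f (- (0 + (-1) *\<^sub>R z))) \<partial>lborel)"
    by (rule nn_lborel_affine) auto
  also have "\<dots> = (\<integral>\<^sup>+z. ennreal (phi z) * f z \<partial>lborel)"
    by (simp add: phi_def)
  also have "\<dots> = (\<integral>\<^sup>+z. f z \<partial>std)"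
    by (rule nn_std[symmetric]) simp
  finally show ?thesis .
qed

lemma nn_std_sq: "(\<integral>\<^sup>+z. ennreal ((norm z)\<^sup>2) \<partial>(std :: (real^'d) measure)) = real CARD('d)"
proof -
  have "(\<integral>\<^sup>+z. ennreal ((norm z)\<^sup>2) \<partial>(std :: (real^'d) measure))
      = (\<integral>\<^sup>+z. ennreal (phi (z::real^'d)) * ennreal ((norm z)\<^sup>2) \<partial>lborel)"
    by (simp add: std_def' nn_integral_density)
  also have "\<dots> = (\<integral>\<^sup>+z. (\<Sum>b0\<in>(Basis::(real^'d) set). (\<Prod>b\<in>Basis.
        ennreal (if b = b0 then std_normal_density (z \<bullet> b) * (z \<bullet> b)\<^sup>2 else std_normal_density (z \<bullet> b)))) \<partial>(lborel::(real^'d) measure))"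
  proof (intro nn_integral_cong)
    fix z :: "real^'d"
    have "(\<Sum>b0\<in>(Basis::(real^'d) set). (\<Prod>b\<in>Basis.
        ennreal (if b = b0 then std_normal_density (z \<bullet> b) * (z \<bullet> b)\<^sup>2 else std_normal_density (z \<bullet> b))))
      = (\<Sum>b0\<in>(Basis::(real^'d) set). ennreal (\<Prod>b\<in>Basis.
         (std_normal_density (z \<bullet> b) * (if b = b0 then (z \<bullet> b)\<^sup>2 else 1))))"
      by (intro sum.cong refl) (auto simp: prod_ennreal normal_density_nonneg intro!: arg_cong[where f=ennreal] prod.cong)
    also have "\<dots> = (\<Sum>b0\<in>(Basis::(real^'d) set). ennreal (phi z * (z \<bullet> b0)\<^sup>2))"
      by (intro sum.cong refl arg_cong[where f=ennreal]) (simp add: prod.distrib phi_prod prod.delta)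
    also have "\<dots> = ennreal (\<Sum>b0\<in>(Basis::(real^'d) set). phi z * (z \<bullet> b0)\<^sup>2)"
      by (rule sum_ennreal) (simp add: phi_nonneg)
    also have "\<dots> = ennreal (phi z) * ennreal ((norm z)\<^sup>2)"
      by (simp add: norm_sq_basis sum_distrib_left ennreal_mult'[symmetric] phi_nonneg)
    finally show "ennreal (phi z) * ennreal ((norm z)\<^sup>2) = (\<Sum>b0\<in>(Basis::(real^'d) set). (\<Prod>b\<in>Basis.
        ennreal (if b = b0 then std_normal_density (z \<bullet> b) * (z \<bullet> b)\<^sup>2 else std_normal_density (z \<bullet> b))))"
      by simp
  qed
  also have "\<dots> = (\<Sum>b0\<in>(Basis::(real^'d) set). (\<integral>\<^sup>+z. (\<Prod>b\<in>Basis.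
        ennreal (if b = b0 then std_normal_density (z \<bullet> b) * (z \<bullet> b)\<^sup>2 else std_normal_density (z \<bullet> b))) \<partial>(lborel::(real^'d) measure)))"
    by (rule nn_integral_sum) auto
  also have "\<dots> = (\<Sum>b0\<in>(Basis::(real^'d) set). (\<Prod>b\<in>Basis. (\<integral>\<^sup>+t.
        ennreal (if b = b0 then std_normal_density t * t\<^sup>2 else std_normal_density t) \<partial>lborel)))"
    by (intro sum.cong refl nn_integral_lborel_prod[where f="\<lambda>b t. ennreal (if b = _ then std_normal_density t * t\<^sup>2 else std_normal_density t)"]) auto
  also have "\<dots> = (\<Sum>b0\<in>(Basis::(real^'d) set). 1)"
    by (intro sum.cong refl prod.neutral ballI, rename_tac a b, case_tac "b = a") (simp_all add: nn_std_normal nn_std_normal_sq)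
  also have "\<dots> = real CARD('d)" by (simp add: card_Basis_cart ennreal_of_nat_eq_real_of_nat)
  finally show ?thesis .
qed


lemma parallelogram_sq: "(norm (a + b))\<^sup>2 + (norm (a - b))\<^sup>2 = 2 * (norm a)\<^sup>2 + 2 * (norm (b::'a::real_inner))\<^sup>2"
  by (simp add: power2_norm_eq_inner inner_add_left inner_add_right inner_diff_left inner_diff_right inner_commute)

lemma nn_std_shift_sq:
  "(\<integral>\<^sup>+z. ennreal ((norm (a + t *\<^sub>R z))\<^sup>2) \<partial>(std :: (real^'d) measure))
     = ennreal ((norm a)\<^sup>2 + t\<^sup>2 * real CARD('d))"
proof -
  interpret P: prob_space "std :: (real^'d) measure" by (rule std_prob)
  define I where "I = (\<integral>\<^sup>+z. ennreal ((norm (a + t *\<^sub>R z))\<^sup>2) \<partial>(std :: (real^'d) measure))"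
  have I2: "(\<integral>\<^sup>+z. ennreal ((norm (a - t *\<^sub>R z))\<^sup>2) \<partial>(std :: (real^'d) measure)) = I"
    unfolding I_def using std_sym[where f="\<lambda>z. ennreal ((norm (a + t *\<^sub>R (z::real^'d)))\<^sup>2)"] by simp
  have "I + I = (\<integral>\<^sup>+z. ennreal ((norm (a + t *\<^sub>R z))\<^sup>2) + ennreal ((norm (a - t *\<^sub>R z))\<^sup>2) \<partial>(std :: (real^'d) measure))"
    unfolding I_def by (subst nn_integral_add) (auto simp: I2[unfolded I_def])
  also have "\<dots> = (\<integral>\<^sup>+z. ennreal (2 * (norm a)\<^sup>2) + ennreal (2 * t\<^sup>2) * ennreal ((norm z)\<^sup>2) \<partial>(std :: (real^'d) measure))"
    by (intro nn_integral_cong) (simp add: ennreal_plus[symmetric] ennreal_mult'[symmetric] parallelogram_sq power_mult_distrib del: ennreal_plus)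
  also have "\<dots> = ennreal (2 * (norm a)\<^sup>2) + ennreal (2 * t\<^sup>2) * real CARD('d)"
    by (subst nn_integral_add) (auto simp: nn_integral_cmult nn_std_sq P.emeasure_space_1[simplified])
  also have "\<dots> = ennreal (2 * ((norm a)\<^sup>2 + t\<^sup>2 * real CARD('d)))"
    by (simp add: ennreal_plus[symmetric] ennreal_mult'[symmetric] algebra_simps del: ennreal_plus)
  also have "\<dots> = 2 * ennreal ((norm a)\<^sup>2 + t\<^sup>2 * real CARD('d))"
    by (subst ennreal_mult') auto
  finally have "2 * I = 2 * ennreal ((norm a)\<^sup>2 + t\<^sup>2 * real CARD('d))"
    by (simp add: mult_2)
  then have "(2 * I) / 2 = (2 * ennreal ((norm a)\<^sup>2 + t\<^sup>2 * real CARD('d))) / 2" by simp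
  then show ?thesis unfolding I_def[symmetric]
    using mult_divide_eq_ennreal[of 2 I] mult_divide_eq_ennreal[of 2 "ennreal ((norm a)\<^sup>2 + t\<^sup>2 * real CARD('d))"]
    by (simp add: mult.commute)
qed

lemma gauss_affine:
  assumes s: "0 \<le> s2"
  shows "gauss (m::real^'d) s2 = distr std borel (\<lambda>z. m + sqrt s2 *\<^sub>R z)"
proof (cases "s2 = 0")
  case True
  interpret P: prob_space "std :: (real^'d) measure" by (rule std_prob)
  show ?thesis
  proof (rule measure_eqI)
    show "sets (gauss m s2) = sets (distr (std :: (real^'d) measure) borel (\<lambda>z. m + sqrt s2 *\<^sub>R z))"
      using True by (simp add: gauss_def)
    fix A assume "A \<in> sets (gauss m s2)"
    then have A: "A \<in> sets borel" using True by (simp add: gauss_def)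
    have "emeasure (distr (std :: (real^'d) measure) borel (\<lambda>z. m + sqrt s2 *\<^sub>R z)) A
        = emeasure (std :: (real^'d) measure) ((\<lambda>z. m) -` A \<inter> UNIV)"
      using A True by (subst emeasure_distr) auto
    also have "\<dots> = indicator A m"
      using P.emeasure_space_1 by (cases "m \<in> A") auto
    finally show "emeasure (gauss m s2) A = emeasure (distr (std :: (real^'d) measure) borel (\<lambda>z. m + sqrt s2 *\<^sub>R z)) A"
      using True A by (simp add: gauss_def)
  qed
next
  case False
  then have s2: "0 < s2" using s by simp
  define c where "c = sqrt s2"
  have c: "0 < c" using s2 by (simp add: c_def)
  show ?thesis
  proof (rule measure_eqI)
    show "sets (gauss m s2) = sets (distr (std :: (real^'d) measure) borel (\<lambda>z. m + sqrt s2 *\<^sub>R z))"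
      using False by (simp add: gauss_def)
    fix A assume "A \<in> sets (gauss m s2)"
    then have A[measurable]: "A \<in> sets borel" using False by (simp add: gauss_def)
    define psi where "psi = (\<lambda>x::real^'d. (2 * pi * s2) powr (- real CARD('d) / 2) * exp (- (norm (x - m))\<^sup>2 / (2 * s2)))"
    have key: "\<bar>c\<bar> ^ DIM(real^'d) * psi (m + c *\<^sub>R x) = phi x" for x
    proof -
      have "\<bar>c\<bar> ^ DIM(real^'d) = s2 powr (real CARD('d) / 2)"
        using c s2 by (simp add: c_def powr_half_sqrt[symmetric] powr_power)
      moreover have "(norm (c *\<^sub>R x))\<^sup>2 / (2 * s2) = (norm x)\<^sup>2 / 2"
        using c s2 by (simp add: c_def power_mult_distrib)
      moreover have "(2 * pi * s2) powr (- real CARD('d) / 2) = (2 * pi) powr (- real CARD('d) / 2) * s2 powr (- real CARD('d) / 2)"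
        using s2 by (simp add: powr_mult)
      ultimately show ?thesis
        using s2 by (simp add: psi_def phi_def powr_minus field_simps powr_add[symmetric])
    qed
    have pre: "(\<lambda>z::real^'d. m + c *\<^sub>R z) -` A \<in> sets borel"
      using measurable_sets[of "\<lambda>z::real^'d. m + c *\<^sub>R z" borel borel A] A by simp
    have "emeasure (gauss m s2) A = (\<integral>\<^sup>+x. ennreal (psi x) * indicator A x \<partial>lborel)"
      using False by (simp add: gauss_def psi_def emeasure_density)
    also have "\<dots> = (\<integral>\<^sup>+x. ennreal (\<bar>c\<bar>^DIM(real^'d)) * (ennreal (psi (m + c *\<^sub>R x)) * indicator A (m + c *\<^sub>R x)) \<partial>lborel)"
      using c by (intro nn_lborel_affine) (auto simp: psi_def)
    also have "\<dots> = (\<integral>\<^sup>+x. ennreal (phi x) * indicator ((\<lambda>z. m + c *\<^sub>R z) -` A) x \<partial>lborel)"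
      by (intro nn_integral_cong) (simp add: key[symmetric] mult.assoc ennreal_mult' c split: split_indicator)
    also have "\<dots> = emeasure (std :: (real^'d) measure) ((\<lambda>z. m + c *\<^sub>R z) -` A)"
      using pre by (simp add: std_def' emeasure_density)
    also have "\<dots> = emeasure (distr (std :: (real^'d) measure) borel (\<lambda>z. m + sqrt s2 *\<^sub>R z)) A"
      by (subst emeasure_distr) (auto simp: c_def)
    finally show "emeasure (gauss m s2) A = emeasure (distr (std :: (real^'d) measure) borel (\<lambda>z. m + sqrt s2 *\<^sub>R z)) A" .
  qed
qed



lemma space_traj[simp]: "space (traj_space :: (nat \<Rightarrow> real^'d) measure) = UNIV"
  by (simp add: space_PiM)

lemma meas_std[simp]: "measurable (std :: (real^'d) measure) N = measurable borel N"
  by (rule measurable_cong_sets) simp_all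

lemma meas_upd[measurable (raw)]:
  assumes f: "f \<in> measurable N (traj_space :: (nat \<Rightarrow> real^'d) measure)"
    and g: "g \<in> measurable N (borel :: (real^'d) measure)"
  shows "(\<lambda>w. (f w)(j := g w)) \<in> measurable N (traj_space :: (nat \<Rightarrow> real^'d) measure)"
proof (rule measurable_PiM_single')
  fix i :: nat
  have "(\<lambda>w. ((f w)(j := g w)) i) = (if i = j then g else (\<lambda>w. f w i))"
    by auto
  moreover have "(\<lambda>w. f w i) \<in> borel_measurable N"
    using measurable_component_singleton[of i UNIV "\<lambda>_. borel :: (real^'d) measure"] f
    by (rule measurable_compose[rotated]) simp
  ultimately show "(\<lambda>w. ((f w)(j := g w)) i) \<in> measurable N borel" using g by simp
qed simp

lemma meas_comp[measurable]: "(\<lambda>x::nat \<Rightarrow> real^'d. x i) \<in> borel_measurable traj_space"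
  by (rule measurable_component_singleton) simp

lemma meas_mu[measurable]:
  "(\<lambda>x::nat \<Rightarrow> real^'d. mu_tilde \<beta> lam m (x m) (x 0)) \<in> borel_measurable traj_space"
  unfolding mu_tilde_def by measurable

lemma std_subprob: "(std :: (real^'d) measure) \<in> space (subprob_algebra borel)"
  using std_prob by (auto simp: space_subprob_algebra intro: prob_space_imp_subprob_space)

lemma kernel_meas:
  assumes M: "sets M = sets (traj_space :: (nat \<Rightarrow> real^'d) measure)"
    and f: "(\<lambda>(x, z). f x z) \<in> measurable (M \<Otimes>\<^sub>M (std :: (real^'d) measure)) (traj_space :: (nat \<Rightarrow> real^'d) measure)"
  shows "(\<lambda>x. distr (std :: (real^'d) measure) (traj_space :: (nat \<Rightarrow> real^'d) measure) (f x)) \<in> measurable M (subprob_algebra traj_space)"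
proof (rule measurable_distr2[OF f])
  show "(\<lambda>x. std :: (real^'d) measure) \<in> measurable M (subprob_algebra std)"
    unfolding subprob_algebra_cong[OF sets_std] by (rule measurable_const[OF std_subprob])
qed

lemma fwd_step_alt:
  assumes lam: "0 \<le> lam m"
  shows "fwd_step \<beta> lam m (M :: (nat \<Rightarrow> real^'d) measure) =
    bind M (\<lambda>x. distr (std :: (real^'d) measure) traj_space (\<lambda>z. x(m - 1 := mu_tilde \<beta> lam m (x m) (x 0) + lam m *\<^sub>R z)))"
  unfolding fwd_step_def
proof (intro bind_cong refl)
  fix x :: "nat \<Rightarrow> real^'d"
  have "gauss (mu_tilde \<beta> lam m (x m) (x 0)) ((lam m)\<^sup>2) = distr std borel (\<lambda>z. mu_tilde \<beta> lam m (x m) (x 0) + lam m *\<^sub>R z)"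
    using gauss_affine[of "(lam m)\<^sup>2" "mu_tilde \<beta> lam m (x m) (x 0)"] lam by simp
  then show "distr (gauss (mu_tilde \<beta> lam m (x m) (x 0)) ((lam m)\<^sup>2)) traj_space (\<lambda>y. x(m - 1 := y))
      = distr std traj_space (\<lambda>z. x(m - 1 := mu_tilde \<beta> lam m (x m) (x 0) + lam m *\<^sub>R z))"
    apply simp
    apply (subst distr_distr)
      apply (auto simp: comp_def intro!: meas_upd measurable_const)
    apply measurable
    done
qed

lemma sets_fwd_step:
  assumes "sets M = sets (traj_space :: (nat \<Rightarrow> real^'d) measure)"
  shows "sets (fwd_step \<beta> lam m (M :: (nat \<Rightarrow> real^'d) measure)) = sets (traj_space :: (nat \<Rightarrow> real^'d) measure)"
  unfolding fwd_step_def
  by (rule sets_bind) (auto simp: sets_eq_imp_space_eq[OF assms])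

lemma sets_fwd_init: "sets (fwd_init q \<beta> N) = sets (traj_space :: (nat \<Rightarrow> real^'d) measure)"
  unfolding fwd_init_def by (rule sets_bind) auto

lemma sets_fwd_partial: "sets (fwd_partial q \<beta> lam N k) = sets (traj_space :: (nat \<Rightarrow> real^'d) measure)"
  by (induction k) (simp_all add: sets_fwd_init sets_fwd_step)

lemma nn_step:
  assumes lam: "0 \<le> lam m"
    and M: "sets M = sets (traj_space :: (nat \<Rightarrow> real^'d) measure)"
    and f[measurable]: "f \<in> borel_measurable (traj_space :: (nat \<Rightarrow> real^'d) measure)"
  shows "(\<integral>\<^sup>+w. f w \<partial>fwd_step \<beta> lam m M) =
    (\<integral>\<^sup>+x. (\<integral>\<^sup>+z. f (x(m - 1 := mu_tilde \<beta> lam m (x m) (x 0) + lam m *\<^sub>R z)) \<partial>(std :: (real^'d) measure)) \<partial>M)"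
proof -
  have km: "(\<lambda>x. distr (std :: (real^'d) measure) traj_space (\<lambda>z. x(m - 1 := mu_tilde \<beta> lam m (x m) (x 0) + lam m *\<^sub>R z)))
      \<in> measurable M (subprob_algebra traj_space)"
  proof (rule kernel_meas[OF M])
    show "(\<lambda>(x, z). x(m - 1 := mu_tilde \<beta> lam m (x m) (x 0) + lam m *\<^sub>R z)) \<in> measurable (M \<Otimes>\<^sub>M std) traj_space"
      unfolding measurable_cong_sets[OF sets_pair_measure_cong[OF M refl] refl] by measurable
  qed
  have mz: "(\<lambda>z. x(m - 1 := mu_tilde \<beta> lam m (x m) (x 0) + lam m *\<^sub>R z)) \<in> measurable (std :: (real^'d) measure) traj_space" for x :: "nat \<Rightarrow> real^'d"
    by (intro meas_upd measurable_const) (simp_all, measurable)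
  show ?thesis
    unfolding fwd_step_alt[where lam=lam and m=m, OF lam]
    apply (subst nn_integral_bind[OF f km])
    apply (rule nn_integral_cong)
    apply (subst nn_integral_distr[OF mz])
     apply simp_all
    done
qed


lemma meas_init[measurable (raw)]:
  assumes f: "f \<in> measurable N (borel :: (real^'d) measure)"
    and g: "g \<in> measurable N (borel :: (real^'d) measure)"
  shows "(\<lambda>w. (\<lambda>k::nat. if k = K then g w else f w)) \<in> measurable N (traj_space :: (nat \<Rightarrow> real^'d) measure)"
proof (rule measurable_PiM_single')
  fix i :: nat
  have "(\<lambda>w. (\<lambda>k::nat. if k = K then g w else f w) i) = (if i = K then g else f)"
    by auto
  then show "(\<lambda>w. (\<lambda>k::nat. if k = K then g w else f w) i) \<in> measurable N borel" using f g by simp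
qed simp

lemma fwd_init_alt:
  assumes b: "0 \<le> beta_bar \<beta> N"
  shows "fwd_init q \<beta> N = bind (density lborel (\<lambda>x. ennreal (q x)))
     (\<lambda>x0. distr (std :: (real^'d) measure) traj_space
        (\<lambda>z. (\<lambda>k. if k = N then sqrt (alpha_bar \<beta> N) *\<^sub>R x0 + sqrt (beta_bar \<beta> N) *\<^sub>R z else x0)))"
  unfolding fwd_init_def
proof (intro bind_cong refl)
  fix x0 :: "real^'d"
  have "gauss (sqrt (alpha_bar \<beta> N) *\<^sub>R x0) (beta_bar \<beta> N) = distr std borel (\<lambda>z. sqrt (alpha_bar \<beta> N) *\<^sub>R x0 + sqrt (beta_bar \<beta> N) *\<^sub>R z)"
    by (rule gauss_affine[OF b])
  then show "distr (gauss (sqrt (alpha_bar \<beta> N) *\<^sub>R x0) (beta_bar \<beta> N)) traj_space (\<lambda>xN k. if k = N then xN else x0)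
      = distr std traj_space (\<lambda>z. (\<lambda>k. if k = N then sqrt (alpha_bar \<beta> N) *\<^sub>R x0 + sqrt (beta_bar \<beta> N) *\<^sub>R z else x0))"
    apply simp
    apply (subst distr_distr)
      apply (auto simp: comp_def intro!: meas_init measurable_const)
    apply measurable
    done
qed

lemma nn_init:
  assumes b: "0 \<le> beta_bar \<beta> N"
    and q[measurable]: "q \<in> borel_measurable lborel"
    and f[measurable]: "f \<in> borel_measurable (traj_space :: (nat \<Rightarrow> real^'d) measure)"
  shows "(\<integral>\<^sup>+w. f w \<partial>fwd_init q \<beta> N) =
    (\<integral>\<^sup>+x0. (\<integral>\<^sup>+z. f (\<lambda>k. if k = N then sqrt (alpha_bar \<beta> N) *\<^sub>R x0 + sqrt (beta_bar \<beta> N) *\<^sub>R z else x0)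
        \<partial>(std :: (real^'d) measure)) \<partial>density lborel (\<lambda>x. ennreal (q x)))"
proof -
  have M: "sets (density lborel (\<lambda>x. ennreal (q x))) = sets (borel :: (real^'d) measure)" by simp
  have km: "(\<lambda>x0. distr (std :: (real^'d) measure) traj_space
        (\<lambda>z. (\<lambda>k. if k = N then sqrt (alpha_bar \<beta> N) *\<^sub>R x0 + sqrt (beta_bar \<beta> N) *\<^sub>R z else x0)))
      \<in> measurable (density lborel (\<lambda>x. ennreal (q x))) (subprob_algebra traj_space)"
  proof (rule measurable_distr2)
    show "(\<lambda>x. std :: (real^'d) measure) \<in> measurable (density lborel (\<lambda>x. ennreal (q x))) (subprob_algebra std)"
      unfolding subprob_algebra_cong[OF sets_std] by (rule measurable_const[OF std_subprob])
    show "(\<lambda>(x0, z). (\<lambda>k. if k = N then sqrt (alpha_bar \<beta> N) *\<^sub>R x0 + sqrt (beta_bar \<beta> N) *\<^sub>R z else x0))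
        \<in> measurable (density lborel (\<lambda>x. ennreal (q x)) \<Otimes>\<^sub>M std) traj_space"
      unfolding measurable_cong_sets[OF sets_pair_measure_cong[OF M sets_std] refl]
    proof -
      have eq: "(\<lambda>(x0, z). (\<lambda>k. if k = N then sqrt (alpha_bar \<beta> N) *\<^sub>R (x0::real^'d) + sqrt (beta_bar \<beta> N) *\<^sub>R z else x0))
        = (\<lambda>w. (\<lambda>k. if k = N then sqrt (alpha_bar \<beta> N) *\<^sub>R (fst w :: real^'d) + sqrt (beta_bar \<beta> N) *\<^sub>R (snd w :: real^'d) else fst w))"
        by (auto simp: fun_eq_iff)
      show "(\<lambda>(x0, z). (\<lambda>k. if k = N then sqrt (alpha_bar \<beta> N) *\<^sub>R (x0::real^'d) + sqrt (beta_bar \<beta> N) *\<^sub>R z else x0))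
        \<in> measurable (borel \<Otimes>\<^sub>M borel) traj_space"
        apply (subst eq)
        apply (rule meas_init)
         apply measurable
        done
    qed
  qed
  have mz: "(\<lambda>z. (\<lambda>k. if k = N then sqrt (alpha_bar \<beta> N) *\<^sub>R x0 + sqrt (beta_bar \<beta> N) *\<^sub>R z else x0)) \<in> measurable (std :: (real^'d) measure) traj_space" for x0 :: "real^'d"
    by (intro meas_init measurable_const) (simp_all, measurable)
  show ?thesis
    unfolding fwd_init_alt[OF b]
    apply (subst nn_integral_bind[OF f km])
    apply (rule nn_integral_cong)
    apply (subst nn_integral_distr[OF mz])
     apply simp_all
    done
qed



context
  fixes q :: "real^'d \<Rightarrow> real" and \<beta> lam :: "nat \<Rightarrow> real" and N :: nat
  assumes N_pos: "N \<ge> 1"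
    and beta_range: "\<And>k. k \<in> {1..N} \<Longrightarrow> 0 < \<beta> k \<and> \<beta> k < 1"
    and lambda_nonneg: "\<And>k. k \<in> {1..N} \<Longrightarrow> 0 \<le> lam k"
    and lambda_bound: "\<And>k. k \<in> {1..N} \<Longrightarrow> (lam k)\<^sup>2 \<le> beta_bar \<beta> (k - 1)"
    and q_meas[measurable]: "q \<in> borel_measurable lborel"
    and q_nonneg: "\<And>x. 0 \<le> q x"
    and q_prob: "(\<integral>\<^sup>+ x. ennreal (q x) \<partial>lborel) = 1"
    and q_second_moment: "integrable (density lborel (\<lambda>x. ennreal (q x))) (\<lambda>x. (norm x)\<^sup>2)"
begin

lemma ab0[simp]: "alpha_bar \<beta> 0 = 1" by (simp add: alpha_bar_def)
lemma bb0[simp]: "beta_bar \<beta> 0 = 0" by (simp add: beta_bar_def)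

lemma as_pos: "k \<in> {1..N} \<Longrightarrow> 0 < alpha_s \<beta> k \<and> alpha_s \<beta> k < 1"
  using beta_range[of k] by (simp add: alpha_s_def)

lemma ab_step: "1 \<le> k \<Longrightarrow> alpha_bar \<beta> k = alpha_bar \<beta> (k - 1) * alpha_s \<beta> k"
  by (cases k) (simp_all add: alpha_bar_def prod.nat_ivl_Suc')

lemma ab_bounds: "k \<le> N \<Longrightarrow> 0 < alpha_bar \<beta> k \<and> alpha_bar \<beta> k \<le> 1"
proof (induction k)
  case 0 then show ?case by simp
next
  case (Suc k)
  then have "0 < alpha_s \<beta> (Suc k) \<and> alpha_s \<beta> (Suc k) < 1" using as_pos[of "Suc k"] by simp
  moreover have "alpha_bar \<beta> (Suc k) = alpha_bar \<beta> k * alpha_s \<beta> (Suc k)" using ab_step[of "Suc k"] by simp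
  ultimately show ?case using Suc by (simp add: mult_le_one)
qed

lemma ab_lt1: "k \<in> {1..N} \<Longrightarrow> alpha_bar \<beta> k < 1"
proof -
  assume k: "k \<in> {1..N}"
  have "alpha_bar \<beta> k = alpha_bar \<beta> (k - 1) * alpha_s \<beta> k" using ab_step k by simp
  moreover have "alpha_bar \<beta> (k - 1) \<le> 1" "alpha_bar \<beta> (k-1) > 0" using ab_bounds[of "k-1"] k by auto
  moreover have "alpha_s \<beta> k < 1" "alpha_s \<beta> k > 0" using as_pos k by auto
  ultimately show ?thesis by (smt (verit) mult_le_one mult_strict_left_mono mult.commute)
qed

lemma bb_pos: "k \<in> {1..N} \<Longrightarrow> 0 < beta_bar \<beta> k"
  using ab_lt1 by (simp add: beta_bar_def)

lemma bb_nonneg: "k \<le> N \<Longrightarrow> 0 \<le> beta_bar \<beta> k"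
  using ab_bounds by (simp add: beta_bar_def)

lemma lam1: "lam 1 = 0"
  using lambda_bound[of 1] N_pos by simp

lemma lam1'[simp]: "lam (Suc 0) = 0"
  using lam1 by simp


abbreviation "qm \<equiv> density lborel (\<lambda>x. ennreal (q x))"
abbreviation "PP k \<equiv> fwd_partial q \<beta> lam N k"

lemma qm_prob: "prob_space qm"
  by (rule prob_spaceI) (simp add: emeasure_density q_prob)

lemma sets_PP[measurable_cong, simp]: "sets (PP k) = sets (traj_space :: (nat \<Rightarrow> real^'d) measure)"
  by (rule sets_fwd_partial)

lemma space_PP[simp]: "space (PP k) = UNIV"
  using sets_eq_imp_space_eq[OF sets_PP] by simp

lemma meas_PP[simp]: "measurable (PP k) M' = measurable traj_space M'"
  by (rule measurable_cong_sets) simp_all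

lemma nn_PP_step:
  assumes k: "Suc k \<le> N - 1" and f[measurable]: "f \<in> borel_measurable (traj_space :: (nat \<Rightarrow> real^'d) measure)"
  shows "(\<integral>\<^sup>+w. f w \<partial>PP (Suc k)) = (\<integral>\<^sup>+x. (\<integral>\<^sup>+z. f (x(N - k - 1 := mu_tilde \<beta> lam (N - k) (x (N - k)) (x 0) + lam (N - k) *\<^sub>R z)) \<partial>(std :: (real^'d) measure)) \<partial>PP k)"
proof -
  have "0 \<le> lam (N - k)" using k by (intro lambda_nonneg) auto
  then show ?thesis by (simp add: nn_step)
qed

lemma PP_inv:
  assumes kk: "k0 \<le> k" "k \<le> N - 1"
    and f[measurable]: "f \<in> borel_measurable (traj_space :: (nat \<Rightarrow> real^'d) measure)"
    and dep: "\<And>j x y. 1 \<le> j \<Longrightarrow> j < N - k0 \<Longrightarrow> f (x(j := y)) = f x"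
  shows "(\<integral>\<^sup>+w. f w \<partial>PP k) = (\<integral>\<^sup>+w. f w \<partial>PP k0)"
  using kk
proof (induction k)
  case 0 then show ?case by simp
next
  case (Suc k)
  show ?case
  proof (cases "k0 = Suc k")
    case True then show ?thesis by simp
  next
    case False
    then have k0: "k0 \<le> k" using Suc by simp
    have "(\<integral>\<^sup>+w. f w \<partial>PP (Suc k)) = (\<integral>\<^sup>+x. (\<integral>\<^sup>+z. f x \<partial>(std :: (real^'d) measure)) \<partial>PP k)"
      unfolding nn_PP_step[OF Suc(3) f]
      using Suc(3) k0 by (intro nn_integral_cong) (simp add: dep)
    also have "\<dots> = (\<integral>\<^sup>+x. f x \<partial>PP k)"
      by (simp add: nn_integral_const)
    finally show ?thesis using Suc k0 by simp
  qed
qed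

lemma PP0_x0:
  assumes g[measurable]: "g \<in> borel_measurable borel"
  shows "(\<integral>\<^sup>+w. g (w 0) \<partial>PP 0) = (\<integral>\<^sup>+x. g x \<partial>qm)"
proof -
  have "(\<integral>\<^sup>+w. g (w 0) \<partial>PP 0) = (\<integral>\<^sup>+x0. (\<integral>\<^sup>+z. g x0 \<partial>(std :: (real^'d) measure)) \<partial>qm)"
    using N_pos by (simp add: nn_init bb_nonneg)
  also have "\<dots> = (\<integral>\<^sup>+x. g x \<partial>qm)"
    by (simp add: nn_integral_const)
  finally show ?thesis .
qed

lemma PP_x0:
  assumes k: "k \<le> N - 1" and g[measurable]: "g \<in> borel_measurable borel"
  shows "(\<integral>\<^sup>+w. g (w 0) \<partial>PP k) = (\<integral>\<^sup>+x. g x \<partial>qm)"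
proof -
  have "(\<integral>\<^sup>+w. g (w 0) \<partial>PP k) = (\<integral>\<^sup>+w. g (w 0) \<partial>PP 0)"
    by (rule PP_inv) (use k in simp_all)
  also have "\<dots> = (\<integral>\<^sup>+x. g x \<partial>qm)" by (rule PP0_x0[OF g])
  finally show ?thesis .
qed

lemma PP_prob: assumes k: "k \<le> N - 1" shows "prob_space (PP k)"
proof (rule prob_spaceI)
  have "emeasure (PP k) (space (PP k)) = (\<integral>\<^sup>+w. (\<lambda>_. 1) (w 0) \<partial>PP k)"
    by simp
  also have "\<dots> = (\<integral>\<^sup>+x. 1 \<partial>qm)" by (rule PP_x0[OF k]) simp
  also have "\<dots> = 1" using prob_space.emeasure_space_1[OF qm_prob] by simp
  finally show "emeasure (PP k) (space (PP k)) = 1" .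
qed


definition "cc n = sqrt (beta_bar \<beta> (n - 1) - (lam n)\<^sup>2) / sqrt (beta_bar \<beta> n)"

lemma mu_u: "mu_tilde \<beta> lam n xn x0 - sqrt (alpha_bar \<beta> (n - 1)) *\<^sub>R x0 = cc n *\<^sub>R (xn - sqrt (alpha_bar \<beta> n) *\<^sub>R x0)"
  by (simp add: mu_tilde_def cc_def)

lemma cc_sq: "n \<in> {1..N} \<Longrightarrow> (cc n)\<^sup>2 * beta_bar \<beta> n = beta_bar \<beta> (n - 1) - (lam n)\<^sup>2"
  using bb_pos[of n] lambda_bound[of n] by (simp add: cc_def power_divide)

lemma nn_ennreal_affine:
  assumes "prob_space M" and [measurable]: "g \<in> borel_measurable M" and "0 \<le> a" "0 \<le> e" "\<And>x. 0 \<le> g x"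
  shows "(\<integral>\<^sup>+x. ennreal (a * g x + e) \<partial>M) = ennreal a * (\<integral>\<^sup>+x. ennreal (g x) \<partial>M) + ennreal e"
proof -
  have "(\<integral>\<^sup>+x. ennreal (a * g x + e) \<partial>M) = (\<integral>\<^sup>+x. ennreal a * ennreal (g x) + ennreal e \<partial>M)"
    using assms by (intro nn_integral_cong) (subst ennreal_plus, simp_all add: ennreal_mult)
  also have "\<dots> = ennreal a * (\<integral>\<^sup>+x. ennreal (g x) \<partial>M) + ennreal e"
    using assms prob_space.emeasure_space_1[OF assms(1)] by (simp add: nn_integral_add nn_integral_cmult)
  finally show ?thesis .
qed

lemma J_aux:
  "\<forall>n. n \<in> {1..N} \<longrightarrow> N - n = i \<longrightarrow>
     (\<integral>\<^sup>+w. ennreal ((norm (w n - sqrt (alpha_bar \<beta> n) *\<^sub>R w 0))\<^sup>2) \<partial>PP (N - n))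
       = ennreal (real CARD('d) * beta_bar \<beta> n)"
proof (induction i)
  case 0
  show ?case
  proof (intro allI impI)
    fix n assume n: "n \<in> {1..N}" "N - n = 0"
    then have nN: "n = N" by simp
    have "(\<integral>\<^sup>+w. ennreal ((norm (w n - sqrt (alpha_bar \<beta> n) *\<^sub>R w 0))\<^sup>2) \<partial>PP (N - n))
        = (\<integral>\<^sup>+x0. (\<integral>\<^sup>+z. ennreal ((norm (0 + sqrt (beta_bar \<beta> N) *\<^sub>R z))\<^sup>2) \<partial>(std :: (real^'d) measure)) \<partial>qm)"
      using nN N_pos by (simp add: nn_init bb_nonneg)
    also have "\<dots> = (\<integral>\<^sup>+x0. ennreal (real CARD('d) * beta_bar \<beta> N) \<partial>qm)"
      by (simp only: nn_std_shift_sq) (simp add: bb_nonneg mult.commute)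
    also have "\<dots> = ennreal (real CARD('d) * beta_bar \<beta> n)"
      using prob_space.emeasure_space_1[OF qm_prob] nN by simp
    finally show "(\<integral>\<^sup>+w. ennreal ((norm (w n - sqrt (alpha_bar \<beta> n) *\<^sub>R w 0))\<^sup>2) \<partial>PP (N - n))
       = ennreal (real CARD('d) * beta_bar \<beta> n)" .
  qed
next
  case (Suc i)
  show ?case
  proof (intro allI impI)
    fix n assume n: "n \<in> {1..N}" "N - n = Suc i"
    then have n1: "Suc n \<in> {1..N}" "N - Suc n = i" by auto
    have IH: "(\<integral>\<^sup>+w. ennreal ((norm (w (Suc n) - sqrt (alpha_bar \<beta> (Suc n)) *\<^sub>R w 0))\<^sup>2) \<partial>PP i)
       = ennreal (real CARD('d) * beta_bar \<beta> (Suc n))"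
      using Suc.IH n1 by auto
    have ki: "Suc i \<le> N - 1" "N - i = Suc n" "N - i - 1 = n" using n by auto
    define F where "F = (\<lambda>w::nat \<Rightarrow> real^'d. ennreal ((norm (w n - sqrt (alpha_bar \<beta> n) *\<^sub>R w 0))\<^sup>2))"
    have Fm[measurable]: "F \<in> borel_measurable traj_space" unfolding F_def by measurable
    have step: "(\<integral>\<^sup>+w. F w \<partial>PP (Suc i)) = (\<integral>\<^sup>+x. (\<integral>\<^sup>+z. F (x(N - i - 1 := mu_tilde \<beta> lam (N - i) (x (N - i)) (x 0) + lam (N - i) *\<^sub>R z)) \<partial>(std :: (real^'d) measure)) \<partial>PP i)"
      by (rule nn_PP_step[OF ki(1) Fm])
    have "(\<integral>\<^sup>+w. ennreal ((norm (w n - sqrt (alpha_bar \<beta> n) *\<^sub>R w 0))\<^sup>2) \<partial>PP (N - n))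
      = (\<integral>\<^sup>+x. (\<integral>\<^sup>+z. ennreal ((norm ((mu_tilde \<beta> lam (Suc n) (x (Suc n)) (x 0) - sqrt (alpha_bar \<beta> n) *\<^sub>R x 0) + lam (Suc n) *\<^sub>R z))\<^sup>2)
            \<partial>(std :: (real^'d) measure)) \<partial>PP i)"
      unfolding n(2) F_def[symmetric] step ki(2,3)
      using n by (intro nn_integral_cong) (simp add: F_def algebra_simps)
    also have "\<dots> = (\<integral>\<^sup>+x. ennreal ((cc (Suc n))\<^sup>2 * (norm (x (Suc n) - sqrt (alpha_bar \<beta> (Suc n)) *\<^sub>R x 0))\<^sup>2
         + (lam (Suc n))\<^sup>2 * real CARD('d)) \<partial>PP i)"
      by (intro nn_integral_cong) (simp add: nn_std_shift_sq mu_u[of "Suc n", simplified] power_mult_distrib)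
    also have "\<dots> = ennreal ((cc (Suc n))\<^sup>2) * ennreal (real CARD('d) * beta_bar \<beta> (Suc n)) + ennreal ((lam (Suc n))\<^sup>2 * real CARD('d))"
      using ki by (subst nn_ennreal_affine) (simp_all add: PP_prob IH)
    also have "\<dots> = ennreal (real CARD('d) * beta_bar \<beta> n)"
    proof -
      have "(cc (Suc n))\<^sup>2 * (real CARD('d) * beta_bar \<beta> (Suc n)) + (lam (Suc n))\<^sup>2 * real CARD('d)
          = real CARD('d) * beta_bar \<beta> n"
      proof -
        have e: "(lam (Suc n))\<^sup>2 + beta_bar \<beta> (Suc n) * (cc (Suc n))\<^sup>2 = beta_bar \<beta> n"
          using cc_sq[OF n1(1)] by (simp add: algebra_simps)
        have "real CARD('d) * ((lam (Suc n))\<^sup>2 + beta_bar \<beta> (Suc n) * (cc (Suc n))\<^sup>2) = real CARD('d) * beta_bar \<beta> n"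
          by (simp only: e)
        then show ?thesis by (simp add: algebra_simps)
      qed
      moreover have "0 \<le> (cc (Suc n))\<^sup>2 * (real CARD('d) * beta_bar \<beta> (Suc n))"
        using bb_nonneg[of "Suc n"] n1 by auto
      ultimately show ?thesis
        by (simp add: ennreal_mult'[symmetric] ennreal_plus[symmetric] del: ennreal_plus)
    qed
    finally show "(\<integral>\<^sup>+w. ennreal ((norm (w n - sqrt (alpha_bar \<beta> n) *\<^sub>R w 0))\<^sup>2) \<partial>PP (N - n))
       = ennreal (real CARD('d) * beta_bar \<beta> n)" .
  qed
qed

lemma J: "n \<in> {1..N} \<Longrightarrow>
     (\<integral>\<^sup>+w. ennreal ((norm (w n - sqrt (alpha_bar \<beta> n) *\<^sub>R w 0))\<^sup>2) \<partial>PP (N - n))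
       = ennreal (real CARD('d) * beta_bar \<beta> n)"
  using J_aux by blast


abbreviation "QQ \<equiv> PP (N - 1)"

lemma QQ_prob: "prob_space QQ" by (rule PP_prob) simp

lemma QQ_x0: "g \<in> borel_measurable borel \<Longrightarrow> (\<integral>\<^sup>+w. g (w 0) \<partial>QQ) = (\<integral>\<^sup>+x. g x \<partial>qm)"
  by (rule PP_x0) simp_all

lemma QQ_u: assumes n: "n \<in> {1..N}"
  shows "(\<integral>\<^sup>+w. ennreal ((norm (w n - sqrt (alpha_bar \<beta> n) *\<^sub>R w 0))\<^sup>2) \<partial>QQ)
       = ennreal (real CARD('d) * beta_bar \<beta> n)"
proof -
  have "(\<integral>\<^sup>+w. ennreal ((norm (w n - sqrt (alpha_bar \<beta> n) *\<^sub>R w 0))\<^sup>2) \<partial>QQ)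
     = (\<integral>\<^sup>+w. ennreal ((norm (w n - sqrt (alpha_bar \<beta> n) *\<^sub>R w 0))\<^sup>2) \<partial>PP (N - n))"
    using n by (intro PP_inv) auto
  also have "\<dots> = ennreal (real CARD('d) * beta_bar \<beta> n)" by (rule J[OF n])
  finally show ?thesis .
qed

lemma mu1: "mu_tilde \<beta> lam 1 xn x0 = (x0 :: real^'d)"
  by (simp add: mu_tilde_def)

lemma D:
  assumes n: "n \<in> {1..N}"
    and W[measurable]: "W \<in> borel_measurable (traj_space :: (nat \<Rightarrow> real^'d) measure)"
    and dep: "\<And>x y. x n = y n \<Longrightarrow> W x = W y"
  shows "(\<integral>\<^sup>+w. ennreal ((norm (w (n - 1) - W w))\<^sup>2) \<partial>QQ)
     = (\<integral>\<^sup>+w. ennreal ((norm (mu_tilde \<beta> lam n (w n) (w 0) - W w))\<^sup>2) \<partial>QQ) + ennreal ((lam n)\<^sup>2 * real CARD('d))"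
proof (cases "n = 1")
  case True
  then show ?thesis using mu1 by simp
next
  case False
  then have n2: "2 \<le> n" "n \<le> N" using n by auto
  have Wupd: "W (x(j := y)) = W x" if "j \<noteq> n" for x j y
    using that by (intro dep) simp
  have "(\<integral>\<^sup>+w. ennreal ((norm (w (n - 1) - W w))\<^sup>2) \<partial>QQ)
      = (\<integral>\<^sup>+w. ennreal ((norm (w (n - 1) - W w))\<^sup>2) \<partial>PP (Suc (N - n)))"
    using n2 by (intro PP_inv) (auto simp: Wupd)
  also have "\<dots> = (\<integral>\<^sup>+x. (\<integral>\<^sup>+z. ennreal ((norm ((mu_tilde \<beta> lam n (x n) (x 0) - W x) + lam n *\<^sub>R z))\<^sup>2)
            \<partial>(std :: (real^'d) measure)) \<partial>PP (N - n))"
  proof -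
    define F where "F = (\<lambda>w::nat \<Rightarrow> real^'d. ennreal ((norm (w (n - 1) - W w))\<^sup>2))"
    have Fm[measurable]: "F \<in> borel_measurable traj_space" unfolding F_def by measurable
    have ki: "Suc (N - n) \<le> N - 1" "N - (N - n) = n" "N - (N - n) - 1 = n - 1" using n2 by auto
    have step: "(\<integral>\<^sup>+w. F w \<partial>PP (Suc (N - n))) = (\<integral>\<^sup>+x. (\<integral>\<^sup>+z. F (x(N - (N - n) - 1 := mu_tilde \<beta> lam (N - (N - n)) (x (N - (N - n))) (x 0) + lam (N - (N - n)) *\<^sub>R z)) \<partial>(std :: (real^'d) measure)) \<partial>PP (N - n))"
      by (rule nn_PP_step[OF ki(1) Fm])
    show ?thesis
      unfolding F_def[symmetric] step ki(2,3)
      using n2 by (intro nn_integral_cong) (simp add: F_def Wupd algebra_simps)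
  qed
  also have "\<dots> = (\<integral>\<^sup>+x. ennreal ((norm (mu_tilde \<beta> lam n (x n) (x 0) - W x))\<^sup>2 + (lam n)\<^sup>2 * real CARD('d)) \<partial>PP (N - n))"
    by (intro nn_integral_cong) (simp add: nn_std_shift_sq)
  also have "\<dots> = (\<integral>\<^sup>+x. ennreal ((norm (mu_tilde \<beta> lam n (x n) (x 0) - W x))\<^sup>2) \<partial>PP (N - n)) + ennreal ((lam n)\<^sup>2 * real CARD('d))"
    using nn_ennreal_affine[of "PP (N - n)" "\<lambda>x. (norm (mu_tilde \<beta> lam n (x n) (x 0) - W x))\<^sup>2" 1 "(lam n)\<^sup>2 * real CARD('d)"]
    using n2 by (simp add: PP_prob)
  also have "(\<integral>\<^sup>+x. ennreal ((norm (mu_tilde \<beta> lam n (x n) (x 0) - W x))\<^sup>2) \<partial>PP (N - n))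
      = (\<integral>\<^sup>+x. ennreal ((norm (mu_tilde \<beta> lam n (x n) (x 0) - W x))\<^sup>2) \<partial>QQ)"
    using n2 by (intro PP_inv[symmetric]) (auto simp: Wupd)
  finally show ?thesis .
qed

end



lemma ineq_a1: "\<bar>t::real\<bar> \<le> 1 + t\<^sup>2"
proof -
  have "0 \<le> (\<bar>t\<bar> - 1)\<^sup>2" by simp
  then show ?thesis by (simp add: power2_diff power2_abs)
qed

lemma ineq_a2: "((a::real) * f + b * g)\<^sup>2 \<le> 2 * a\<^sup>2 * f\<^sup>2 + 2 * b\<^sup>2 * g\<^sup>2"
proof -
  have "0 \<le> (a * f - b * g)\<^sup>2" by simp
  then show ?thesis by (simp add: power2_diff power2_sum power_mult_distrib)
qed

lemma ineq_a3: "\<bar>(f::real) * g\<bar> \<le> f\<^sup>2 + g\<^sup>2"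
proof -
  have "0 \<le> (\<bar>f\<bar> - \<bar>g\<bar>)\<^sup>2" by simp
  then have h: "2 * (\<bar>f\<bar> * \<bar>g\<bar>) \<le> f\<^sup>2 + g\<^sup>2" by (simp add: power2_diff mult.assoc)
  have "0 \<le> \<bar>f\<bar> * \<bar>g\<bar>" by simp
  then have "\<bar>f\<bar> * \<bar>g\<bar> \<le> f\<^sup>2 + g\<^sup>2" using h by linarith
  then show ?thesis by (simp add: abs_mult)
qed

lemma L2_int:
  fixes f :: "'a \<Rightarrow> real"
  assumes "finite_measure M" and [measurable]: "f \<in> borel_measurable M" and "integrable M (\<lambda>x. (f x)\<^sup>2)"
  shows "integrable M f"
proof (rule Bochner_Integration.integrable_bound)
  show "integrable M (\<lambda>x. 1 + (f x)\<^sup>2)"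
    using assms by (intro Bochner_Integration.integrable_add) (auto intro: finite_measure.integrable_const)
  show "AE x in M. norm (f x) \<le> norm (1 + (f x)\<^sup>2)"
  proof (intro AE_I2)
    fix x
    have "\<bar>f x\<bar> \<le> 1 + (f x)\<^sup>2" by (rule ineq_a1)
    then show "norm (f x) \<le> norm (1 + (f x)\<^sup>2)" by simp
  qed
qed simp

lemma L2_lin:
  fixes f g :: "'a \<Rightarrow> real"
  assumes [measurable]: "f \<in> borel_measurable M" "g \<in> borel_measurable M"
    and "integrable M (\<lambda>x. (f x)\<^sup>2)" "integrable M (\<lambda>x. (g x)\<^sup>2)"
  shows "integrable M (\<lambda>x. (a * f x + b * g x)\<^sup>2)"
proof (rule Bochner_Integration.integrable_bound)
  show "integrable M (\<lambda>x. 2 * a\<^sup>2 * (f x)\<^sup>2 + 2 * b\<^sup>2 * (g x)\<^sup>2)"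
    using assms by (intro Bochner_Integration.integrable_add integrable_mult_right) auto
  show "AE x in M. norm ((a * f x + b * g x)\<^sup>2) \<le> norm (2 * a\<^sup>2 * (f x)\<^sup>2 + 2 * b\<^sup>2 * (g x)\<^sup>2)"
  proof (intro AE_I2)
    fix x
    have "(a * f x + b * g x)\<^sup>2 \<le> 2 * a\<^sup>2 * (f x)\<^sup>2 + 2 * b\<^sup>2 * (g x)\<^sup>2"
      by (rule ineq_a2)
    then show "norm ((a * f x + b * g x)\<^sup>2) \<le> norm (2 * a\<^sup>2 * (f x)\<^sup>2 + 2 * b\<^sup>2 * (g x)\<^sup>2)"
      by simp
  qed
qed simp

lemma L2_prod:
  fixes f g :: "'a \<Rightarrow> real"
  assumes [measurable]: "f \<in> borel_measurable M" "g \<in> borel_measurable M"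
    and "integrable M (\<lambda>x. (f x)\<^sup>2)" "integrable M (\<lambda>x. (g x)\<^sup>2)"
  shows "integrable M (\<lambda>x. f x * g x)"
proof (rule Bochner_Integration.integrable_bound)
  show "integrable M (\<lambda>x. (f x)\<^sup>2 + (g x)\<^sup>2)"
    using assms by (intro Bochner_Integration.integrable_add) auto
  show "AE x in M. norm (f x * g x) \<le> norm ((f x)\<^sup>2 + (g x)\<^sup>2)"
  proof (intro AE_I2)
    fix x
    have "\<bar>f x * g x\<bar> \<le> (f x)\<^sup>2 + (g x)\<^sup>2"
      by (rule ineq_a3)
    then show "norm (f x * g x) \<le> norm ((f x)\<^sup>2 + (g x)\<^sup>2)" by simp
  qed
qed simp

context sigma_finite_subalgebra
begin

lemma CE_L2:
  assumes "prob_space M" and [measurable]: "X \<in> borel_measurable M" and X2: "integrable M (\<lambda>x. (X x)\<^sup>2)"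
  shows "integrable M (\<lambda>x. (real_cond_exp M F X x)\<^sup>2)"
proof -
  have fm: "finite_measure M" using assms(1) by (rule prob_space.axioms(1))
  have X: "integrable M X"
    by (rule L2_int[OF fm assms(2) X2])
  have "integrable M (\<lambda>x. (\<lambda>t. t\<^sup>2) (real_cond_exp M F X x))"
  proof (rule integrable_convex_cond_exp[where I=UNIV and a=0 and b=0 and q="\<lambda>t. t\<^sup>2", OF X])
    show "integrable M (\<lambda>x. (X x)\<^sup>2)" by (rule X2)
    show "convex_on UNIV (\<lambda>t::real. t\<^sup>2)" using convex_power2 by simp
    show "AE x in M. X x \<in> UNIV" by simp
    show "UNIV = {0<..<0} \<or> UNIV = {0<..} \<or> UNIV = {..<0} \<or> UNIV = (UNIV :: real set)" by simp
    show "(\<lambda>t::real. t\<^sup>2) \<in> borel_measurable borel" by measurable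
    show "emeasure M (space M) = \<infinity> \<Longrightarrow> 0 \<in> (UNIV :: real set)" by simp
  qed
  then show ?thesis by simp
qed

lemma CE_min:
  assumes P: "prob_space M" and X[measurable]: "X \<in> borel_measurable M" and X2: "integrable M (\<lambda>x. (X x)\<^sup>2)"
    and Z[measurable]: "Z \<in> borel_measurable F" and Z2: "integrable M (\<lambda>x. (Z x)\<^sup>2)"
  shows "integrable M (\<lambda>x. (X x - real_cond_exp M F X x)\<^sup>2)"
    "(\<integral>x. (X x - real_cond_exp M F X x)\<^sup>2 \<partial>M) \<le> (\<integral>x. (X x - Z x)\<^sup>2 \<partial>M)"
proof -
  let ?C = "real_cond_exp M F X"
  have CF[measurable]: "?C \<in> borel_measurable F" by (rule borel_measurable_cond_exp)
  have CM[measurable]: "?C \<in> borel_measurable M" by (rule measurable_from_subalg[OF subalg CF])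
  have ZM[measurable]: "Z \<in> borel_measurable M" by (rule measurable_from_subalg[OF subalg Z])
  have C2: "integrable M (\<lambda>x. (?C x)\<^sup>2)" by (rule CE_L2[OF P X X2])
  have i1: "integrable M (\<lambda>x. (X x - ?C x)\<^sup>2)"
    using L2_lin[OF X CM X2 C2, of 1 "-1"] by simp
  then show "integrable M (\<lambda>x. (X x - ?C x)\<^sup>2)" .
  have i2: "integrable M (\<lambda>x. (?C x - Z x)\<^sup>2)"
    using L2_lin[OF CM ZM C2 Z2, of 1 "-1"] by simp
  have DF[measurable]: "(\<lambda>x. ?C x - Z x) \<in> borel_measurable F" by measurable
  have DM[measurable]: "(\<lambda>x. ?C x - Z x) \<in> borel_measurable M" by measurable
  have D2: "integrable M (\<lambda>x. (?C x - Z x)\<^sup>2)" by (rule i2)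
  have iDX: "integrable M (\<lambda>x. (?C x - Z x) * X x)" by (rule L2_prod[OF DM X D2 X2])
  have iDC: "integrable M (\<lambda>x. (?C x - Z x) * ?C x)" by (rule L2_prod[OF DM CM D2 C2])
  have cross: "(\<integral>x. (?C x - Z x) * ?C x \<partial>M) = (\<integral>x. (?C x - Z x) * X x \<partial>M)"
    by (rule real_cond_exp_intg(2)[OF iDX DF X])
  have eq: "(\<lambda>x. (X x - Z x)\<^sup>2) = (\<lambda>x. (X x - ?C x)\<^sup>2 + (?C x - Z x)\<^sup>2 + 2 * ((?C x - Z x) * X x - (?C x - Z x) * ?C x))"
    by (rule ext) (simp add: power2_eq_square algebra_simps)
  have "(\<integral>x. (X x - Z x)\<^sup>2 \<partial>M) = (\<integral>x. (X x - ?C x)\<^sup>2 \<partial>M) + (\<integral>x. (?C x - Z x)\<^sup>2 \<partial>M)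
      + 2 * ((\<integral>x. (?C x - Z x) * X x \<partial>M) - (\<integral>x. (?C x - Z x) * ?C x \<partial>M))"
    unfolding eq
    apply (subst Bochner_Integration.integral_add)
      apply (rule Bochner_Integration.integrable_add[OF i1 i2])
     apply (rule integrable_mult_right, rule Bochner_Integration.integrable_diff[OF iDX iDC])
    apply (subst Bochner_Integration.integral_add[OF i1 i2])
    apply (subst integral_mult_right_zero)
    apply (subst Bochner_Integration.integral_diff[OF iDX iDC])
    apply (rule refl)
    done
  also have "\<dots> = (\<integral>x. (X x - ?C x)\<^sup>2 \<partial>M) + (\<integral>x. (?C x - Z x)\<^sup>2 \<partial>M)"
    using cross by simp
  finally have e2: "(\<integral>x. (X x - Z x)\<^sup>2 \<partial>M) = (\<integral>x. (X x - ?C x)\<^sup>2 \<partial>M) + (\<integral>x. (?C x - Z x)\<^sup>2 \<partial>M)" .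
  have h0: "0 \<le> (\<integral>x. (?C x - Z x)\<^sup>2 \<partial>M)"
    by (intro integral_nonneg_AE AE_I2) simp
  show "(\<integral>x. (X x - ?C x)\<^sup>2 \<partial>M) \<le> (\<integral>x. (X x - Z x)\<^sup>2 \<partial>M)"
    using e2 h0 by linarith
qed

end



lemma vec_repr: "(\<chi> i. g i) = (\<Sum>i\<in>UNIV. g i *\<^sub>R axis i (1::real))"
  by (simp add: vec_eq_iff axis_def if_distrib[where f="\<lambda>t. _ * t"] cong: if_cong)

lemma vec_meas: "(\<And>i. (\<lambda>w. f i w) \<in> borel_measurable M) \<Longrightarrow> (\<lambda>w. (\<chi> i. f i w) :: real^'d) \<in> borel_measurable M"
  unfolding vec_repr by (intro borel_measurable_sum borel_measurable_scaleR measurable_const) auto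

lemma vec_norm_sq: "(norm (x::real^'d))\<^sup>2 = (\<Sum>i\<in>UNIV. (x$i)\<^sup>2)"
  by (simp add: norm_vec_def L2_set_def sum_nonneg)

lemma vec_sq_le: "(norm (a + b))\<^sup>2 \<le> 2 * (norm a)\<^sup>2 + 2 * (norm (b::'a::real_inner))\<^sup>2"
  using parallelogram_sq[of a b] by (smt (verit) zero_le_power2)

context
  fixes q :: "real^'d \<Rightarrow> real" and \<beta> lam :: "nat \<Rightarrow> real" and N :: nat and n :: nat
  assumes N_pos: "N \<ge> 1"
    and beta_range: "\<And>k. k \<in> {1..N} \<Longrightarrow> 0 < \<beta> k \<and> \<beta> k < 1"
    and lambda_nonneg: "\<And>k. k \<in> {1..N} \<Longrightarrow> 0 \<le> lam k"
    and lambda_bound: "\<And>k. k \<in> {1..N} \<Longrightarrow> (lam k)\<^sup>2 \<le> beta_bar \<beta> (k - 1)"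
    and q_meas[measurable]: "q \<in> borel_measurable lborel"
    and q_nonneg: "\<And>x. 0 \<le> q x"
    and q_prob: "(\<integral>\<^sup>+ x. ennreal (q x) \<partial>lborel) = 1"
    and q_second_moment: "integrable (density lborel (\<lambda>x. ennreal (q x))) (\<lambda>x. (norm x)\<^sup>2)"
    and n_range: "n \<in> {1..N}"
begin

abbreviation "Q \<equiv> fwd_partial q \<beta> lam N (N - 1)"
abbreviation "FF \<equiv> vimage_algebra (UNIV :: (nat \<Rightarrow> real^'d) set) (\<lambda>\<omega>. \<omega> n) borel"

lemmas setting = N_pos beta_range lambda_nonneg lambda_bound q_meas q_nonneg q_prob q_second_moment

lemma space_Q[simp]: "space (fwd_partial q \<beta> lam N k) = UNIV"
  by (rule space_PP[OF setting])

lemma sets_Q[simp, measurable_cong]: "sets (fwd_partial q \<beta> lam N k) = sets (traj_space :: (nat \<Rightarrow> real^'d) measure)"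
  by (rule sets_fwd_partial)

lemma meas_Q[simp]: "measurable (fwd_partial q \<beta> lam N k) M' = measurable traj_space M'"
  by (rule measurable_cong_sets) simp_all

lemma Q_prob: "prob_space Q"
  using QQ_prob[OF setting] .

lemma subalg: "subalgebra Q FF"
  unfolding subalgebra_def
proof
  show "sets FF \<subseteq> sets Q"
    by (rule sets_image_in_sets) simp_all
  show "space FF = space Q" by simp
qed

lemma sfs: "sigma_finite_subalgebra Q FF"
proof (rule finite_measure_subalgebra_is_sigma_finite)
  show "finite_measure_subalgebra Q FF"
    unfolding finite_measure_subalgebra_def finite_measure_subalgebra_axioms_def
    using Q_prob subalg unfolding prob_space_def by simp
qed

lemma Fdep:
  assumes h: "h \<in> borel_measurable FF" and xy: "x n = y n"
  shows "h x = (h y :: real)"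
proof -
  have "h -` {h x} \<inter> space FF \<in> sets FF"
    using measurable_sets[OF h, of "{h x}"] by simp
  moreover have "sets FF = {(\<lambda>\<omega>. \<omega> n) -` A \<inter> UNIV | A. A \<in> sets (borel :: (real^'d) measure)}"
    by (rule sets_vimage_algebra2) simp
  ultimately obtain B where B: "h -` {h x} = (\<lambda>\<omega>. \<omega> n) -` B"
    by auto
  have "x \<in> h -` {h x}" by simp
  then have "x n \<in> B" using B by auto
  then have "y \<in> h -` {h x}" using B xy by auto
  then show ?thesis by simp
qed

lemma Fmeas:
  assumes g: "g \<in> borel_measurable (borel :: (real^'d) measure)"
  shows "(\<lambda>\<omega>. g (\<omega> n)) \<in> borel_measurable FF"
proof -
  have m: "(\<lambda>\<omega>::nat \<Rightarrow> real^'d. \<omega> n) \<in> measurable FF borel"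
    by (rule measurable_vimage_algebra1) simp
  show ?thesis by (rule measurable_compose[OF m g])
qed

lemma F2M:
  assumes h: "h \<in> borel_measurable FF"
  shows "h \<in> borel_measurable (traj_space :: (nat \<Rightarrow> real^'d) measure)"
proof -
  have "h \<in> borel_measurable Q" by (rule measurable_from_subalg[OF subalg h])
  then show ?thesis by (simp only: meas_Q)
qed


lemma nth_meas[measurable]: "(\<lambda>x::real^'d. x $ i) \<in> borel_measurable borel"
  by (intro borel_measurable_continuous_onI continuous_on_component continuous_on_id)

lemma fin_x0: "(\<integral>\<^sup>+\<omega>. ennreal ((norm (\<omega> 0))\<^sup>2) \<partial>Q) < \<infinity>"
proof -
  have "(\<integral>\<^sup>+\<omega>. ennreal ((norm (\<omega> 0))\<^sup>2) \<partial>Q) = (\<integral>\<^sup>+x. ennreal ((norm x)\<^sup>2) \<partial>density lborel (\<lambda>x. ennreal (q x)))"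
    by (rule QQ_x0[OF setting, where g="\<lambda>x. ennreal ((norm x)\<^sup>2)"]) measurable
  also have "\<dots> < \<infinity>"
    using q_second_moment unfolding integrable_iff_bounded by simp
  finally show ?thesis .
qed

lemma fin_u: "(\<integral>\<^sup>+\<omega>. ennreal ((norm (\<omega> n - sqrt (alpha_bar \<beta> n) *\<^sub>R \<omega> 0))\<^sup>2) \<partial>Q) < \<infinity>"
  using QQ_u[OF setting n_range] by simp

lemma fin_comb:
  fixes A B C :: "(nat \<Rightarrow> real^'d) \<Rightarrow> real^'d"
  assumes A[measurable]: "A \<in> borel_measurable (traj_space :: (nat \<Rightarrow> real^'d) measure)"
    and B[measurable]: "B \<in> borel_measurable (traj_space :: (nat \<Rightarrow> real^'d) measure)"
    and C[measurable]: "C \<in> borel_measurable (traj_space :: (nat \<Rightarrow> real^'d) measure)"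
    and fB: "(\<integral>\<^sup>+\<omega>. ennreal ((norm (B \<omega>))\<^sup>2) \<partial>Q) < \<infinity>"
    and fC: "(\<integral>\<^sup>+\<omega>. ennreal ((norm (C \<omega>))\<^sup>2) \<partial>Q) < \<infinity>"
    and eq: "\<And>\<omega>. A \<omega> = s *\<^sub>R B \<omega> + t *\<^sub>R C \<omega>"
  shows "(\<integral>\<^sup>+\<omega>. ennreal ((norm (A \<omega>))\<^sup>2) \<partial>Q) < \<infinity>"
proof -
  have "(\<integral>\<^sup>+\<omega>. ennreal ((norm (A \<omega>))\<^sup>2) \<partial>Q)
      \<le> (\<integral>\<^sup>+\<omega>. ennreal (2 * s\<^sup>2) * ennreal ((norm (B \<omega>))\<^sup>2) + ennreal (2 * t\<^sup>2) * ennreal ((norm (C \<omega>))\<^sup>2) \<partial>Q)"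
  proof (rule nn_integral_mono)
    fix \<omega>
    have "(norm (A \<omega>))\<^sup>2 \<le> 2 * (norm (s *\<^sub>R B \<omega>))\<^sup>2 + 2 * (norm (t *\<^sub>R C \<omega>))\<^sup>2"
      unfolding eq by (rule vec_sq_le)
    also have "\<dots> = 2 * s\<^sup>2 * (norm (B \<omega>))\<^sup>2 + 2 * t\<^sup>2 * (norm (C \<omega>))\<^sup>2"
      by (simp add: power_mult_distrib)
    finally have "(norm (A \<omega>))\<^sup>2 \<le> 2 * s\<^sup>2 * (norm (B \<omega>))\<^sup>2 + 2 * t\<^sup>2 * (norm (C \<omega>))\<^sup>2" .
    then have "ennreal ((norm (A \<omega>))\<^sup>2) \<le> ennreal (2 * s\<^sup>2 * (norm (B \<omega>))\<^sup>2 + 2 * t\<^sup>2 * (norm (C \<omega>))\<^sup>2)"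
      by (rule ennreal_leI)
    also have "\<dots> = ennreal (2 * s\<^sup>2) * ennreal ((norm (B \<omega>))\<^sup>2) + ennreal (2 * t\<^sup>2) * ennreal ((norm (C \<omega>))\<^sup>2)"
      by (subst ennreal_plus) (simp_all add: ennreal_mult)
    finally show "ennreal ((norm (A \<omega>))\<^sup>2) \<le> ennreal (2 * s\<^sup>2) * ennreal ((norm (B \<omega>))\<^sup>2) + ennreal (2 * t\<^sup>2) * ennreal ((norm (C \<omega>))\<^sup>2)" .
  qed
  also have "\<dots> = ennreal (2 * s\<^sup>2) * (\<integral>\<^sup>+\<omega>. ennreal ((norm (B \<omega>))\<^sup>2) \<partial>Q) + ennreal (2 * t\<^sup>2) * (\<integral>\<^sup>+\<omega>. ennreal ((norm (C \<omega>))\<^sup>2) \<partial>Q)"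
    by (subst nn_integral_add) (simp_all add: nn_integral_cmult)
  also have "\<dots> < \<infinity>"
    using fB fC by (simp add: ennreal_mult_less_top less_top[symmetric] ennreal_mult_eq_top_iff)
  finally show ?thesis .
qed


abbreviation "ccn \<equiv> sqrt (beta_bar \<beta> (n - 1) - (lam n)\<^sup>2) / sqrt (beta_bar \<beta> n)"

lemma mu_expand: "mu_tilde \<beta> lam n xn x0 = sqrt (alpha_bar \<beta> (n - 1)) *\<^sub>R x0 + ccn *\<^sub>R (xn - sqrt (alpha_bar \<beta> n) *\<^sub>R (x0 :: real^'d))"
  by (simp add: mu_tilde_def)

lemma fin_xn: "(\<integral>\<^sup>+\<omega>. ennreal ((norm (\<omega> n))\<^sup>2) \<partial>Q) < \<infinity>"
  by (rule fin_comb[where B="\<lambda>\<omega>. \<omega> n - sqrt (alpha_bar \<beta> n) *\<^sub>R \<omega> 0" and C="\<lambda>\<omega>. \<omega> 0" and s=1 and t="sqrt (alpha_bar \<beta> n)"])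
     (use fin_u fin_x0 in simp_all)

lemma fin_mu: "(\<integral>\<^sup>+\<omega>. ennreal ((norm (mu_tilde \<beta> lam n (\<omega> n) (\<omega> 0)))\<^sup>2) \<partial>Q) < \<infinity>"
  by (rule fin_comb[where C="\<lambda>\<omega>. \<omega> n - sqrt (alpha_bar \<beta> n) *\<^sub>R \<omega> 0" and B="\<lambda>\<omega>. \<omega> 0" and t=ccn and s="sqrt (alpha_bar \<beta> (n - 1))"])
     (use fin_u fin_x0 in \<open>simp_all add: mu_expand\<close>)

lemma fin_xp: "(\<integral>\<^sup>+\<omega>. ennreal ((norm (\<omega> (n - 1)))\<^sup>2) \<partial>Q) < \<infinity>"
proof -
  have "(\<integral>\<^sup>+\<omega>. ennreal ((norm (\<omega> (n - 1) - (\<lambda>_. 0) \<omega>))\<^sup>2) \<partial>Q)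
     = (\<integral>\<^sup>+\<omega>. ennreal ((norm (mu_tilde \<beta> lam n (\<omega> n) (\<omega> 0) - (\<lambda>_. 0) \<omega>))\<^sup>2) \<partial>Q) + ennreal ((lam n)\<^sup>2 * real CARD('d))"
    by (rule D[OF setting n_range]) simp_all
  then show ?thesis using fin_mu by simp
qed

lemma coord_L2:
  fixes A :: "(nat \<Rightarrow> real^'d) \<Rightarrow> real^'d"
  assumes A[measurable]: "A \<in> borel_measurable traj_space"
    and fA: "(\<integral>\<^sup>+\<omega>. ennreal ((norm (A \<omega>))\<^sup>2) \<partial>Q) < \<infinity>"
  shows "integrable Q (\<lambda>\<omega>. (A \<omega> $ i)\<^sup>2)"
  unfolding integrable_iff_bounded
proof
  show "(\<lambda>\<omega>. (A \<omega> $ i)\<^sup>2) \<in> borel_measurable Q" by simp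
  have "(\<integral>\<^sup>+\<omega>. ennreal (norm ((A \<omega> $ i)\<^sup>2)) \<partial>Q) \<le> (\<integral>\<^sup>+\<omega>. ennreal ((norm (A \<omega>))\<^sup>2) \<partial>Q)"
  proof (rule nn_integral_mono)
    fix \<omega>
    have "\<bar>A \<omega> $ i\<bar> \<le> norm (A \<omega>)" by (rule component_le_norm_cart)
    then have "(A \<omega> $ i)\<^sup>2 \<le> (norm (A \<omega>))\<^sup>2"
      by (metis abs_ge_zero power2_abs power_mono)
    then show "ennreal (norm ((A \<omega> $ i)\<^sup>2)) \<le> ennreal ((norm (A \<omega>))\<^sup>2)"
      by (intro ennreal_leI) simp
  qed
  then show "(\<integral>\<^sup>+\<omega>. ennreal (norm ((A \<omega> $ i)\<^sup>2)) \<partial>Q) < \<infinity>"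
    using fA by (rule le_less_trans)
qed

lemma sum_coords:
  fixes A :: "(nat \<Rightarrow> real^'d) \<Rightarrow> real^'d"
  assumes A[measurable]: "A \<in> borel_measurable traj_space"
    and iA: "\<And>i. integrable Q (\<lambda>\<omega>. (A \<omega> $ i)\<^sup>2)"
  shows "ennreal (\<Sum>i\<in>UNIV. \<integral>\<omega>. (A \<omega> $ i)\<^sup>2 \<partial>Q) = (\<integral>\<^sup>+\<omega>. ennreal ((norm (A \<omega>))\<^sup>2) \<partial>Q)"
proof -
  have "(\<integral>\<^sup>+\<omega>. ennreal ((norm (A \<omega>))\<^sup>2) \<partial>Q) = (\<integral>\<^sup>+\<omega>. (\<Sum>i\<in>UNIV. ennreal ((A \<omega> $ i)\<^sup>2)) \<partial>Q)"
    by (intro nn_integral_cong) (simp add: vec_norm_sq sum_ennreal)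
  also have "\<dots> = (\<Sum>i\<in>UNIV. (\<integral>\<^sup>+\<omega>. ennreal ((A \<omega> $ i)\<^sup>2) \<partial>Q))"
    by (rule nn_integral_sum) simp
  also have "\<dots> = (\<Sum>i\<in>UNIV. ennreal (\<integral>\<omega>. (A \<omega> $ i)\<^sup>2 \<partial>Q))"
    by (intro sum.cong refl nn_integral_eq_integral iA) simp
  also have "\<dots> = ennreal (\<Sum>i\<in>UNIV. \<integral>\<omega>. (A \<omega> $ i)\<^sup>2 \<partial>Q)"
    by (rule sum_ennreal) simp
  finally show ?thesis by simp
qed

lemma iXP: "integrable Q (\<lambda>\<omega>. (\<omega> (n - 1) $ i)\<^sup>2)"
  using coord_L2[of "\<lambda>\<omega>. \<omega> (n - 1)"] fin_xp by simp

lemma iX0: "integrable Q (\<lambda>\<omega>. (\<omega> 0 $ i)\<^sup>2)"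
  using coord_L2[of "\<lambda>\<omega>. \<omega> 0"] fin_x0 by simp

lemma iXN: "integrable Q (\<lambda>\<omega>. (\<omega> n $ i)\<^sup>2)"
  using coord_L2[of "\<lambda>\<omega>. \<omega> n"] fin_xn by simp


lemma XM[measurable]: "(\<lambda>\<omega>::nat \<Rightarrow> real^'d. \<omega> k $ i) \<in> borel_measurable traj_space"
  by measurable

lemma CE_F: "real_cond_exp Q FF f \<in> borel_measurable FF"
  by (rule borel_measurable_cond_exp)

lemma vec_from_coords:
  fixes Z :: "(nat \<Rightarrow> real^'d) \<Rightarrow> real^'d"
  assumes ZF: "\<And>i. (\<lambda>\<omega>. Z \<omega> $ i) \<in> borel_measurable FF"
  shows "Z \<in> borel_measurable traj_space" "\<And>x y. x n = y n \<Longrightarrow> Z x = Z y"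
proof -
  have ZM: "(\<lambda>\<omega>. Z \<omega> $ i) \<in> borel_measurable traj_space" for i using F2M[OF ZF] .
  have "Z = (\<lambda>\<omega>. \<chi> i. Z \<omega> $ i)" by (simp add: vec_lambda_eta)
  then show "Z \<in> borel_measurable traj_space"
    using vec_meas[of "\<lambda>i \<omega>. Z \<omega> $ i", OF ZM] by simp
  show "\<And>x y. x n = y n \<Longrightarrow> Z x = Z y"
    by (simp add: vec_eq_iff Fdep[OF ZF])
qed

lemma UB:
  fixes Z :: "(nat \<Rightarrow> real^'d) \<Rightarrow> real^'d"
  assumes ZF: "\<And>i. (\<lambda>\<omega>. Z \<omega> $ i) \<in> borel_measurable FF" and Z2: "\<And>i. integrable Q (\<lambda>\<omega>. (Z \<omega> $ i)\<^sup>2)"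
  shows "ennreal (\<Sum>i\<in>UNIV. \<integral>\<omega>. (\<omega> (n - 1) $ i - real_cond_exp Q FF (\<lambda>\<omega>. \<omega> (n - 1) $ i) \<omega>)\<^sup>2 \<partial>Q)
     \<le> (\<integral>\<^sup>+\<omega>. ennreal ((norm (mu_tilde \<beta> lam n (\<omega> n) (\<omega> 0) - Z \<omega>))\<^sup>2) \<partial>Q) + ennreal ((lam n)\<^sup>2 * real CARD('d))"
proof -
  have Zm[measurable]: "Z \<in> borel_measurable traj_space" by (rule vec_from_coords(1)[OF ZF])
  have ZM[measurable]: "(\<lambda>\<omega>. Z \<omega> $ i) \<in> borel_measurable traj_space" for i using F2M[OF ZF] .
  have le: "(\<integral>\<omega>. (\<omega> (n - 1) $ i - real_cond_exp Q FF (\<lambda>\<omega>. \<omega> (n - 1) $ i) \<omega>)\<^sup>2 \<partial>Q)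
      \<le> (\<integral>\<omega>. (\<omega> (n - 1) $ i - Z \<omega> $ i)\<^sup>2 \<partial>Q)" for i
    by (rule sigma_finite_subalgebra.CE_min(2)[OF sfs Q_prob _ iXP ZF Z2]) simp
  have "ennreal (\<Sum>i\<in>UNIV. \<integral>\<omega>. (\<omega> (n - 1) $ i - real_cond_exp Q FF (\<lambda>\<omega>. \<omega> (n - 1) $ i) \<omega>)\<^sup>2 \<partial>Q)
      \<le> ennreal (\<Sum>i\<in>UNIV. \<integral>\<omega>. (\<omega> (n - 1) $ i - Z \<omega> $ i)\<^sup>2 \<partial>Q)"
    by (intro ennreal_leI sum_mono le)
  also have "\<dots> = (\<integral>\<^sup>+\<omega>. ennreal ((norm (\<omega> (n - 1) - Z \<omega>))\<^sup>2) \<partial>Q)"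
  proof -
    have i: "integrable Q (\<lambda>\<omega>. ((\<omega> (n - 1) - Z \<omega>) $ i)\<^sup>2)" for i
      using L2_lin[of "\<lambda>\<omega>. \<omega> (n - 1) $ i" Q "\<lambda>\<omega>. Z \<omega> $ i" 1 "-1"] iXP Z2 by simp
    show ?thesis
      using sum_coords[of "\<lambda>\<omega>. \<omega> (n - 1) - Z \<omega>", OF _ i] by simp
  qed
  also have "\<dots> = (\<integral>\<^sup>+\<omega>. ennreal ((norm (mu_tilde \<beta> lam n (\<omega> n) (\<omega> 0) - Z \<omega>))\<^sup>2) \<partial>Q) + ennreal ((lam n)\<^sup>2 * real CARD('d))"
    by (rule D[OF setting n_range Zm vec_from_coords(2)[OF ZF]])
  finally show ?thesis .
qed

lemma LB:
  "ennreal ((lam n)\<^sup>2 * real CARD('d)) \<le> ennreal (\<Sum>i\<in>UNIV. \<integral>\<omega>. (\<omega> (n - 1) $ i - real_cond_exp Q FF (\<lambda>\<omega>. \<omega> (n - 1) $ i) \<omega>)\<^sup>2 \<partial>Q)"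
proof -
  define W where "W = (\<lambda>\<omega>. \<chi> i. real_cond_exp Q FF (\<lambda>\<omega>. \<omega> (n - 1) $ i) \<omega>)"
  have WF: "(\<lambda>\<omega>. W \<omega> $ i) \<in> borel_measurable FF" for i
    unfolding W_def by (simp add: CE_F)
  have Wm[measurable]: "W \<in> borel_measurable traj_space" by (rule vec_from_coords(1)[OF WF])
  have i: "integrable Q (\<lambda>\<omega>. ((\<omega> (n - 1) - W \<omega>) $ i)\<^sup>2)" for i
    using sigma_finite_subalgebra.CE_min(1)[OF sfs Q_prob _ iXP, of i "\<lambda>_. 0"]
    by (simp add: W_def)
  have "ennreal (\<Sum>i\<in>UNIV. \<integral>\<omega>. (\<omega> (n - 1) $ i - real_cond_exp Q FF (\<lambda>\<omega>. \<omega> (n - 1) $ i) \<omega>)\<^sup>2 \<partial>Q)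
      = (\<integral>\<^sup>+\<omega>. ennreal ((norm (\<omega> (n - 1) - W \<omega>))\<^sup>2) \<partial>Q)"
  proof -
    have m: "(\<lambda>\<omega>. \<omega> (n - 1) - W \<omega>) \<in> borel_measurable traj_space" by measurable
    show ?thesis using sum_coords[OF m i] by (simp add: W_def)
  qed
  also have "\<dots> = (\<integral>\<^sup>+\<omega>. ennreal ((norm (mu_tilde \<beta> lam n (\<omega> n) (\<omega> 0) - W \<omega>))\<^sup>2) \<partial>Q) + ennreal ((lam n)\<^sup>2 * real CARD('d))"
    by (rule D[OF setting n_range Wm vec_from_coords(2)[OF WF]])
  also have "\<dots> \<ge> ennreal ((lam n)\<^sup>2 * real CARD('d))" by simp
  finally show ?thesis .
qed


abbreviation "SS \<equiv> (\<Sum>i\<in>UNIV. \<integral>\<omega>. (\<omega> (n - 1) $ i - real_cond_exp Q FF (\<lambda>\<omega>. \<omega> (n - 1) $ i) \<omega>)\<^sup>2 \<partial>Q)"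

lemma SS_nonneg: "0 \<le> SS"
  by (intro sum_nonneg integral_nonneg_AE AE_I2) simp

lemma opt_eq: "opt_var q \<beta> lam N n = SS / real CARD('d)"
  unfolding opt_var_def fwd_process_def Let_def space_Q ..

lemma lower: "(lam n)\<^sup>2 \<le> opt_var q \<beta> lam N n"
proof -
  have "(lam n)\<^sup>2 * real CARD('d) \<le> SS"
    using LB SS_nonneg by (simp add: ennreal_le_iff)
  then show ?thesis unfolding opt_eq by (simp add: field_simps)
qed

lemma sq_ab: "sqrt (alpha_bar \<beta> n) = sqrt (alpha_bar \<beta> (n - 1)) * sqrt (alpha_s \<beta> n)"
  using ab_step[OF setting, of n] n_range by (simp add: real_sqrt_mult)

lemma as_pos': "0 < alpha_s \<beta> n"
  using as_pos[OF setting n_range] by simp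

lemma bb_pos': "0 < beta_bar \<beta> n"
  using bb_pos[OF setting n_range] .

lemma Bp_nonneg: "0 \<le> beta_bar \<beta> (n - 1) - (lam n)\<^sup>2"
  using lambda_bound[OF n_range] by simp

lemma upper1: "opt_var q \<beta> lam N n \<le> (lam n)\<^sup>2
    + (sqrt (beta_bar \<beta> n / alpha_s \<beta> n) - sqrt (beta_bar \<beta> (n - 1) - (lam n)\<^sup>2))\<^sup>2"
proof -
  define r where "r = 1 / sqrt (alpha_s \<beta> n)"
  define \<kappa> where "\<kappa> = ccn - r"
  define Z where "Z = (\<lambda>\<omega>::nat \<Rightarrow> real^'d. r *\<^sub>R \<omega> n)"
  have ZF: "(\<lambda>\<omega>. Z \<omega> $ i) \<in> borel_measurable FF" for i
    using Fmeas[of "\<lambda>x. r * x $ i"] by (simp add: Z_def)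
  have Z2: "integrable Q (\<lambda>\<omega>. (Z \<omega> $ i)\<^sup>2)" for i
    using integrable_mult_right[OF iXN[of i], of "r\<^sup>2"] by (simp add: Z_def power_mult_distrib)
  have vid: "mu_tilde \<beta> lam n xn x0 - r *\<^sub>R xn = \<kappa> *\<^sub>R (xn - sqrt (alpha_bar \<beta> n) *\<^sub>R (x0::real^'d))" for xn x0
  proof -
    have sa: "0 < sqrt (alpha_s \<beta> n)" using as_pos' by simp
    have ci: "A * y0 + c * (yn - A * s * y0) - 1 / s * yn = (c - 1 / s) * (yn - A * s * y0)"
      if "0 < s" for A c s y0 yn :: real
      using that by (simp add: field_simps)
    show ?thesis unfolding vec_eq_iff
    proof
      fix i
      show "(mu_tilde \<beta> lam n xn x0 - r *\<^sub>R xn) $ i = (\<kappa> *\<^sub>R (xn - sqrt (alpha_bar \<beta> n) *\<^sub>R x0)) $ i"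
        unfolding mu_expand \<kappa>_def r_def sq_ab
        unfolding vector_minus_component vector_add_component vector_scaleR_component real_scaleR_def
        by (rule ci[OF sa])
    qed
  qed
  have "ennreal SS \<le> (\<integral>\<^sup>+\<omega>. ennreal ((norm (mu_tilde \<beta> lam n (\<omega> n) (\<omega> 0) - Z \<omega>))\<^sup>2) \<partial>Q) + ennreal ((lam n)\<^sup>2 * real CARD('d))"
    by (rule UB[OF ZF Z2])
  also have "(\<integral>\<^sup>+\<omega>. ennreal ((norm (mu_tilde \<beta> lam n (\<omega> n) (\<omega> 0) - Z \<omega>))\<^sup>2) \<partial>Q)
      = (\<integral>\<^sup>+\<omega>. ennreal (\<kappa>\<^sup>2) * ennreal ((norm (\<omega> n - sqrt (alpha_bar \<beta> n) *\<^sub>R \<omega> 0))\<^sup>2) \<partial>Q)"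
    by (intro nn_integral_cong) (simp add: Z_def vid power_mult_distrib ennreal_mult)
  also have "\<dots> = ennreal (\<kappa>\<^sup>2) * ennreal (real CARD('d) * beta_bar \<beta> n)"
    by (subst nn_integral_cmult) (use QQ_u[OF setting n_range] in simp_all)
  also have "\<dots> + ennreal ((lam n)\<^sup>2 * real CARD('d)) = ennreal (\<kappa>\<^sup>2 * (real CARD('d) * beta_bar \<beta> n) + (lam n)\<^sup>2 * real CARD('d))"
    using bb_pos' by (simp add: ennreal_mult ennreal_plus)
  finally have "SS \<le> \<kappa>\<^sup>2 * (real CARD('d) * beta_bar \<beta> n) + (lam n)\<^sup>2 * real CARD('d)"
    using bb_pos' by (subst (asm) ennreal_le_iff) simp_all
  then have "SS / real CARD('d) \<le> (lam n)\<^sup>2 + \<kappa>\<^sup>2 * beta_bar \<beta> n"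
    by (simp add: field_simps)
  moreover have "\<kappa>\<^sup>2 * beta_bar \<beta> n = (sqrt (beta_bar \<beta> n / alpha_s \<beta> n) - sqrt (beta_bar \<beta> (n - 1) - (lam n)\<^sup>2))\<^sup>2"
  proof -
    have "\<kappa>\<^sup>2 * beta_bar \<beta> n = (\<kappa> * sqrt (beta_bar \<beta> n))\<^sup>2"
      using bb_pos' by (simp add: power_mult_distrib)
    also have "\<kappa> * sqrt (beta_bar \<beta> n) = sqrt (beta_bar \<beta> (n - 1) - (lam n)\<^sup>2) - sqrt (beta_bar \<beta> n / alpha_s \<beta> n)"
      using bb_pos' as_pos' by (simp add: \<kappa>_def r_def real_sqrt_divide field_simps)
    finally show ?thesis by (simp add: power2_commute)
  qed
  ultimately show ?thesis unfolding opt_eq by simp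
qed


lemma sq_mid: "(a::real) \<le> x \<Longrightarrow> x \<le> b \<Longrightarrow> (x - (a + b) / 2)\<^sup>2 \<le> ((b - a) / 2)\<^sup>2"
proof -
  assume h: "a \<le> x" "x \<le> b"
  have "(x - (a + b) / 2)\<^sup>2 - ((b - a) / 2)\<^sup>2 = (x - a) * (x - b)"
    by (simp add: power2_eq_square field_simps)
  moreover have "(x - a) * (x - b) \<le> 0" using h by (intro mult_nonneg_nonpos) auto
  ultimately show ?thesis by simp
qed

lemma qm_UNIV: "emeasure (density lborel (\<lambda>x. ennreal (q x))) UNIV = 1"
  using q_prob by (simp add: emeasure_density)

lemma X0_mid:
  assumes H: "AE x in lborel. (\<exists>i. x $ i < a \<or> b < x $ i) \<longrightarrow> q x = 0"
  shows "(\<integral>\<omega>. (\<omega> 0 $ i - (a + b) / 2)\<^sup>2 \<partial>Q) \<le> ((b - a) / 2)\<^sup>2"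
proof -
  have fm: "finite_measure Q" using Q_prob by (rule prob_space.axioms(1))
  have int: "integrable Q (\<lambda>\<omega>. (\<omega> 0 $ i - (a + b) / 2)\<^sup>2)"
    using L2_lin[of "\<lambda>\<omega>. \<omega> 0 $ i" Q "\<lambda>_. 1" 1 "- ((a + b) / 2)"] iX0[of i]
      finite_measure.integrable_const[OF fm, of 1]
    by simp
  have AEq: "AE x in density lborel (\<lambda>x. ennreal (q x)). ennreal ((x $ i - (a + b) / 2)\<^sup>2) \<le> ennreal (((b - a) / 2)\<^sup>2)"
  proof (subst AE_density)
    show "(\<lambda>x. ennreal (q x)) \<in> borel_measurable lborel" by simp
    show "AE x in lborel. 0 < ennreal (q x) \<longrightarrow> ennreal ((x $ i - (a + b) / 2)\<^sup>2) \<le> ennreal (((b - a) / 2)\<^sup>2)"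
      using H
    proof (rule AE_mp, intro AE_I2 impI)
      fix x :: "real^'d"
      assume h1: "(\<exists>i. x $ i < a \<or> b < x $ i) \<longrightarrow> q x = 0" and h2: "0 < ennreal (q x)"
      then have "a \<le> x $ i" "x $ i \<le> b" by (auto simp: not_less[symmetric])
      then show "ennreal ((x $ i - (a + b) / 2)\<^sup>2) \<le> ennreal (((b - a) / 2)\<^sup>2)"
        by (intro ennreal_leI sq_mid)
    qed
  qed
  have "ennreal (\<integral>\<omega>. (\<omega> 0 $ i - (a + b) / 2)\<^sup>2 \<partial>Q) = (\<integral>\<^sup>+\<omega>. ennreal ((\<omega> 0 $ i - (a + b) / 2)\<^sup>2) \<partial>Q)"
    by (rule nn_integral_eq_integral[OF int, symmetric]) simp
  also have "\<dots> = (\<integral>\<^sup>+x. ennreal ((x $ i - (a + b) / 2)\<^sup>2) \<partial>density lborel (\<lambda>x. ennreal (q x)))"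
    by (rule QQ_x0[OF setting, where g="\<lambda>x. ennreal ((x $ i - (a + b) / 2)\<^sup>2)"]) measurable
  also have "\<dots> \<le> (\<integral>\<^sup>+x. ennreal (((b - a) / 2)\<^sup>2) \<partial>density lborel (\<lambda>x. ennreal (q x)))"
    by (rule nn_integral_mono_AE[OF AEq])
  also have "\<dots> = ennreal (((b - a) / 2)\<^sup>2)"
    using qm_UNIV by simp
  finally show ?thesis
    by (subst (asm) ennreal_le_iff) simp_all
qed


lemma upper2:
  assumes H: "AE x in lborel. (\<exists>i. x $ i < a \<or> b < x $ i) \<longrightarrow> q x = 0"
  shows "opt_var q \<beta> lam N n \<le> (lam n)\<^sup>2
              + (sqrt (alpha_bar \<beta> (n - 1))
                 - sqrt (beta_bar \<beta> (n - 1) - (lam n)\<^sup>2) * sqrt (alpha_bar \<beta> n / beta_bar \<beta> n))\<^sup>2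
                * ((b - a) / 2)\<^sup>2"
proof -
  define k where "k = sqrt (alpha_bar \<beta> (n - 1)) - ccn * sqrt (alpha_bar \<beta> n)"
  define C0 where "C0 = (\<lambda>i. real_cond_exp Q FF (\<lambda>\<omega>. \<omega> 0 $ i))"
  define W0 where "W0 = (\<lambda>\<omega>. \<chi> i. C0 i \<omega>)"
  define Z where "Z = (\<lambda>\<omega>. k *\<^sub>R W0 \<omega> + ccn *\<^sub>R \<omega> n)"
  have C0F[measurable]: "C0 i \<in> borel_measurable FF" for i unfolding C0_def by (rule CE_F)
  have C0M[measurable]: "C0 i \<in> borel_measurable traj_space" for i by (rule F2M[OF C0F])
  have C02: "integrable Q (\<lambda>\<omega>. (C0 i \<omega>)\<^sup>2)" for i
    unfolding C0_def by (rule sigma_finite_subalgebra.CE_L2[OF sfs Q_prob _ iX0]) simp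
  have XnF[measurable]: "(\<lambda>\<omega>. \<omega> n $ i) \<in> borel_measurable FF" for i
    by (rule Fmeas[of "\<lambda>x. x $ i", OF nth_meas])
  have Zi: "(\<lambda>\<omega>. Z \<omega> $ i) = (\<lambda>\<omega>. k * C0 i \<omega> + ccn * \<omega> n $ i)" for i
    by (simp add: Z_def W0_def fun_eq_iff)
  have ZF: "(\<lambda>\<omega>. Z \<omega> $ i) \<in> borel_measurable FF" for i
    unfolding Zi by measurable
  have Z2: "integrable Q (\<lambda>\<omega>. (Z \<omega> $ i)\<^sup>2)" for i
    using L2_lin[of "C0 i" Q "\<lambda>\<omega>. \<omega> n $ i" k ccn] C02[of i] iXN[of i] by (simp add: Z_def W0_def)
  have vid: "mu_tilde \<beta> lam n (\<omega> n) (\<omega> 0) - Z \<omega> = k *\<^sub>R (\<omega> 0 - W0 \<omega>)" for \<omega>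
  proof -
    have ci: "A * y0 + c * (yn - S * y0) - ((A - c * S) * w + c * yn) = (A - c * S) * (y0 - w)"
      for A c S y0 yn w :: real
      by (simp add: algebra_simps)
    show ?thesis unfolding vec_eq_iff
    proof
      fix i
      show "(mu_tilde \<beta> lam n (\<omega> n) (\<omega> 0) - Z \<omega>) $ i = (k *\<^sub>R (\<omega> 0 - W0 \<omega>)) $ i"
        unfolding mu_expand k_def Z_def
        unfolding vector_minus_component vector_add_component vector_scaleR_component real_scaleR_def
        by (rule ci)
    qed
  qed
  have W0m[measurable]: "W0 \<in> borel_measurable traj_space"
    unfolding W0_def by (rule vec_meas) simp
  have iA: "integrable Q (\<lambda>\<omega>. ((\<omega> 0 - W0 \<omega>) $ i)\<^sup>2)" for i
    using sigma_finite_subalgebra.CE_min(1)[OF sfs Q_prob _ iX0, of i "\<lambda>_. 0"]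
    by (simp add: W0_def C0_def)
  have leC: "(\<integral>\<omega>. (\<omega> 0 $ i - C0 i \<omega>)\<^sup>2 \<partial>Q) \<le> ((b - a) / 2)\<^sup>2" for i
  proof -
    have fm: "finite_measure Q" using Q_prob by (rule prob_space.axioms(1))
    have "(\<integral>\<omega>. (\<omega> 0 $ i - C0 i \<omega>)\<^sup>2 \<partial>Q) \<le> (\<integral>\<omega>. (\<omega> 0 $ i - (\<lambda>_. (a + b) / 2) \<omega>)\<^sup>2 \<partial>Q)"
      unfolding C0_def
      by (rule sigma_finite_subalgebra.CE_min(2)[OF sfs Q_prob _ iX0])
         (use finite_measure.integrable_const[OF fm, of "((a + b) / 2)\<^sup>2"] in simp_all)
    also have "\<dots> \<le> ((b - a) / 2)\<^sup>2" using X0_mid[OF H] by simp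
    finally show ?thesis .
  qed
  have sumle: "(\<Sum>i\<in>UNIV. \<integral>\<omega>. (\<omega> 0 $ i - C0 i \<omega>)\<^sup>2 \<partial>Q) \<le> real CARD('d) * ((b - a) / 2)\<^sup>2"
    using sum_mono[of UNIV "\<lambda>i. \<integral>\<omega>. (\<omega> 0 $ i - C0 i \<omega>)\<^sup>2 \<partial>Q" "\<lambda>_. ((b - a) / 2)\<^sup>2", OF leC] by simp
  have "ennreal SS \<le> (\<integral>\<^sup>+\<omega>. ennreal ((norm (mu_tilde \<beta> lam n (\<omega> n) (\<omega> 0) - Z \<omega>))\<^sup>2) \<partial>Q) + ennreal ((lam n)\<^sup>2 * real CARD('d))"
    by (rule UB[OF ZF Z2])
  also have "(\<integral>\<^sup>+\<omega>. ennreal ((norm (mu_tilde \<beta> lam n (\<omega> n) (\<omega> 0) - Z \<omega>))\<^sup>2) \<partial>Q)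
      = (\<integral>\<^sup>+\<omega>. ennreal (k\<^sup>2) * ennreal ((norm (\<omega> 0 - W0 \<omega>))\<^sup>2) \<partial>Q)"
    by (intro nn_integral_cong) (simp add: vid power_mult_distrib ennreal_mult)
  also have "\<dots> = ennreal (k\<^sup>2) * (\<integral>\<^sup>+\<omega>. ennreal ((norm (\<omega> 0 - W0 \<omega>))\<^sup>2) \<partial>Q)"
    by (rule nn_integral_cmult) simp
  also have "(\<integral>\<^sup>+\<omega>. ennreal ((norm (\<omega> 0 - W0 \<omega>))\<^sup>2) \<partial>Q) = ennreal (\<Sum>i\<in>UNIV. \<integral>\<omega>. (\<omega> 0 $ i - C0 i \<omega>)\<^sup>2 \<partial>Q)"
  proof -
    have m: "(\<lambda>\<omega>. \<omega> 0 - W0 \<omega>) \<in> borel_measurable traj_space" by measurable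
    show ?thesis using sum_coords[OF m iA] by (simp add: W0_def)
  qed
  also have "ennreal (k\<^sup>2) * ennreal (\<Sum>i\<in>UNIV. \<integral>\<omega>. (\<omega> 0 $ i - C0 i \<omega>)\<^sup>2 \<partial>Q) + ennreal ((lam n)\<^sup>2 * real CARD('d))
      \<le> ennreal (k\<^sup>2) * ennreal (real CARD('d) * ((b - a) / 2)\<^sup>2) + ennreal ((lam n)\<^sup>2 * real CARD('d))"
    by (intro add_right_mono mult_left_mono ennreal_leI sumle) simp
  also have "\<dots> = ennreal (k\<^sup>2 * (real CARD('d) * ((b - a) / 2)\<^sup>2) + (lam n)\<^sup>2 * real CARD('d))"
    by (simp add: ennreal_mult ennreal_plus)
  finally have "SS \<le> k\<^sup>2 * (real CARD('d) * ((b - a) / 2)\<^sup>2) + (lam n)\<^sup>2 * real CARD('d)"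
    by (subst (asm) ennreal_le_iff) simp_all
  then have "SS / real CARD('d) \<le> (lam n)\<^sup>2 + k\<^sup>2 * ((b - a) / 2)\<^sup>2"
    by (simp add: field_simps)
  moreover have "k = sqrt (alpha_bar \<beta> (n - 1)) - sqrt (beta_bar \<beta> (n - 1) - (lam n)\<^sup>2) * sqrt (alpha_bar \<beta> n / beta_bar \<beta> n)"
    unfolding k_def by (simp add: real_sqrt_divide)
  ultimately show ?thesis unfolding opt_eq by simp
qed

end

theorem theorem2:
  fixes q :: "real^'d \<Rightarrow> real"
    and \<beta> lam :: "nat \<Rightarrow> real"
    and N n :: nat
  assumes N_pos: "N \<ge> 1"
    and beta_range: "\<And>k. k \<in> {1..N} \<Longrightarrow> 0 < \<beta> k \<and> \<beta> k < 1"
    and lambda_nonneg: "\<And>k. k \<in> {1..N} \<Longrightarrow> 0 \<le> lam k"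
    and lambda_bound: "\<And>k. k \<in> {1..N} \<Longrightarrow> (lam k)\<^sup>2 \<le> beta_bar \<beta> (k - 1)"
    and q_meas: "q \<in> borel_measurable lborel"
    and q_nonneg: "\<And>x. 0 \<le> q x"
    and q_prob: "(\<integral>\<^sup>+ x. ennreal (q x) \<partial>lborel) = 1"
    and q_second_moment: "integrable (density lborel (\<lambda>x. ennreal (q x))) (\<lambda>x. (norm x)\<^sup>2)"
    and n_range: "n \<in> {1..N}"
  shows "(lam n)\<^sup>2 \<le> opt_var q \<beta> lam N n
       \<and> opt_var q \<beta> lam N n \<le> (lam n)\<^sup>2
            + (sqrt (beta_bar \<beta> n / alpha_s \<beta> n) - sqrt (beta_bar \<beta> (n - 1) - (lam n)\<^sup>2))\<^sup>2
       \<and> (\<forall>a b :: real.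
            (AE x in lborel. (\<exists>i. x $ i < a \<or> b < x $ i) \<longrightarrow> q x = 0) \<longrightarrow>
            opt_var q \<beta> lam N n \<le> (lam n)\<^sup>2
              + (sqrt (alpha_bar \<beta> (n - 1))
                 - sqrt (beta_bar \<beta> (n - 1) - (lam n)\<^sup>2) * sqrt (alpha_bar \<beta> n / beta_bar \<beta> n))\<^sup>2
                * ((b - a) / 2)\<^sup>2)"
  using lower[OF N_pos beta_range lambda_nonneg lambda_bound q_meas q_nonneg q_prob q_second_moment n_range]
    upper1[OF N_pos beta_range lambda_nonneg lambda_bound q_meas q_nonneg q_prob q_second_moment n_range]
    upper2[OF N_pos beta_range lambda_nonneg lambda_bound q_meas q_nonneg q_prob q_second_moment n_range]
  by blast

end
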